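(* Let $z_1,z_2,\dots$ be i.i.d. standard normal random variables, let $I_1\ge 1$ and $I_2\ge 2$ be integers, and set $N_1=I_1$, $N_2=I_1+I_2$. Let $0<r_1<r_2$ and define the events $\zeta_1=\{\sum_{j=1}^{N_1} z_j^2>r_1^2\}$ and $\zeta_2=\{\sum_{j=1}^{N_2} z_j^2>r_2^2\}$. Let $p=\Pr(\chi^2_{I_1}>r_2^2)$, $$K=\frac{e^{-\frac12(r_2^2-I_2)}}{2^{N_1/2}\sqrt{\pi}\,I_2^{(I_2-1)/2}\,\Gamma(N_1/2)},\qquad g(t)=\frac{t^{N_1/2-1}(r_2^2-t)^{I_2/2}}{r_2^2-I_2+2-t},$$ $\underline{\delta}=(I_2-2)/r_2^2$ and $\overline{\delta}=(r_2^2-r_1^2)/r_2^2$. Then $$p+\frac{\sqrt{\pi}K}{2}\int_{r_1^2}^{r_2^2}(r_2^2-t)^{I_2/2-1}t^{I_1/2-1}\,dt\ \le\ \Pr(\zeta_1\cap\zeta_2)$$ and $$\Pr(\zeta_1\cap\zeta_2)\le p+\inf_{\delta\in(\underline{\delta},\overline{\delta})}\left[K\int_{r_1^2}^{(1-\delta)r_2^2}g(t)\,dt+\int_{(1-\delta)r_2^2}^{r_2^2}f_{\chi^2_{I_1}}(t)\,dt\right].$$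
   Context: For a positive integer $k$, $\chi^2_k$ denotes a random variable with the central chi-square distribution with $k$ degrees of freedom, and $f_{\chi^2_k}$ denotes its probability density function. $\Gamma$ is the Gamma function. *)

theory Defs
  imports "HOL-Probability.Probability"
begin

definition chi2_density :: "nat \<Rightarrow> real \<Rightarrow> real" where
  "chi2_density k t =
     (if t > 0 then t powr (real k / 2 - 1) * exp (- t / 2) / (2 powr (real k / 2) * Gamma (real k / 2))
      else 0)"

end

theory Submission
  imports Defs "HOL-Real_Asymp.Real_Asymp"
begin

definition hG :: "real \<Rightarrow> real" where
  "hG x = Gamma x * exp x / x powr (x - 1/2)"

lemma hG_pos: "x > 0 \<Longrightarrow> hG x > 0"
  unfolding hG_def by (intro divide_pos_pos mult_pos_pos Gamma_real_pos) auto

lemma ln_hG: "x > 0 \<Longrightarrow> ln (hG x) = ln (Gamma x) + x - (x - 1/2) * ln x"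
proof -
  assume x: "x > 0"
  have "Gamma x > 0" using x by (rule Gamma_real_pos)
  hence "Gamma x \<noteq> 0" by simp
  thus ?thesis unfolding hG_def using x by (simp add: ln_div ln_mult ln_powr)
qed

lemma ln_hG_diff:
  assumes "x > 0"
  shows "ln (hG x) - ln (hG (x+1)) = (x + 1/2) * (ln (x+1) - ln x) - 1"
proof -
  have g: "Gamma (x+1) = x * Gamma x" using assms by (subst Gamma_plus1) (auto simp: nonpos_Ints_def)
  have "Gamma x > 0" using assms by (rule Gamma_real_pos)
  hence gnz: "Gamma x \<noteq> 0" by simp
  have "ln (Gamma (x+1)) = ln x + ln (Gamma x)"
    unfolding g using assms \<open>Gamma x > 0\<close> by (rule ln_mult_pos)
  moreover have "ln (hG x) = ln (Gamma x) + x - (x - 1/2) * ln x" using assms by (rule ln_hG)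
  moreover have "ln (hG (x+1)) = ln (Gamma (x+1)) + (x+1) - ((x+1) - 1/2) * ln (x+1)"
    using assms by (intro ln_hG) simp
  ultimately show ?thesis by (simp add: algebra_simps)
qed

lemma hG_step_le: "x > 0 \<Longrightarrow> hG (x+1) \<le> hG x"
proof -
  assume x: "x > 0"
  have "2 * ((x+1) - x) / (x + (x+1)) \<le> ln (x+1) - ln x"
    using ln_inverse_approx_ge[of x "x+1"] x by simp
  hence "1 \<le> (x + 1/2) * (ln (x+1) - ln x)" using x by (simp add: field_simps)
  hence "ln (hG (x+1)) \<le> ln (hG x)" using ln_hG_diff[OF x] by simp
  thus ?thesis using hG_pos[OF x] hG_pos[of "x+1"] x by simp
qed

lemma exp_ln_minus: "(a::real) > 0 \<Longrightarrow> exp (ln a - b) = a * exp (- b)"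
  using exp_add[of "ln a" "-b"] by simp

lemma hG_step_ge: "x > 0 \<Longrightarrow> hG x * exp (- 1/(4*x)) \<le> hG (x+1) * exp (- 1/(4*(x+1)))"
proof -
  assume x: "x > 0"
  have "ln (x + 1) - ln x \<le> 1 * (inverse x + inverse (x + 1)) / 2"
    using ln_inverse_approx_le[of x 1] x by simp
  hence "(x + 1/2) * (ln (x+1) - ln x) \<le> (x + 1/2) * ((inverse x + inverse (x + 1)) / 2)"
    using x by (intro mult_left_mono) auto
  also have "\<dots> = 1 + 1/(4*x) - 1/(4*(x+1))"
  proof -
    have "x * (x+1) > 0" using x by simp
    thus ?thesis using x by (simp add: field_simps)
  qed
  finally have "ln (hG x) - 1/(4*x) \<le> ln (hG (x+1)) - 1/(4*(x+1))"
    using ln_hG_diff[OF x] by simp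
  hence "exp (ln (hG x) - 1/(4*x)) \<le> exp (ln (hG (x+1)) - 1/(4*(x+1)))" by simp
  moreover have "exp (ln (hG x) - 1/(4*x)) = hG x * exp (- 1/(4*x))"
    using exp_ln_minus[OF hG_pos[OF x], of "1/(4*x)"] by simp
  moreover have "exp (ln (hG (x+1)) - 1/(4*(x+1))) = hG (x+1) * exp (- 1/(4*(x+1)))"
    using exp_ln_minus[OF hG_pos[of "x+1"], of "1/(4*(x+1))"] x by simp
  ultimately show ?thesis by linarith
qed

lemma hG_iter_le: "x > 0 \<Longrightarrow> hG (x + real m) \<le> hG x"
proof (induction m)
  case (Suc m)
  have "hG (x + real (Suc m)) = hG ((x + real m) + 1)" by (simp add: algebra_simps)
  also have "\<dots> \<le> hG (x + real m)" using Suc by (intro hG_step_le) auto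
  finally show ?case using Suc by simp
qed simp

lemma hG_iter_ge: "x > 0 \<Longrightarrow> hG x * exp (- 1/(4*x)) \<le> hG (x + real m) * exp (- 1/(4*(x + real m)))"
proof (induction m)
  case (Suc m)
  have "hG (x + real m) * exp (- 1/(4*(x + real m))) \<le> hG ((x + real m)+1) * exp (- 1/(4*((x + real m)+1)))"
    using Suc by (intro hG_step_ge) auto
  moreover have "x + real (Suc m) = (x + real m) + 1" by simp
  ultimately show ?case using Suc.IH[OF Suc.prems] by (simp only:)
qed simp

lemma wallis_step_aux:
  fixes x P F G :: real
  assumes "x \<ge> 0" "G \<noteq> 0"
  shows "(P * F^4 / (G^2 * (2*x+1))) * ((4*(x+1)^2) / ((2*x+1)*(2*x+3))) =
         P * 16 * ((x+1)*F)^4 / ((G*(2*x+1)*(2*x+2))^2 * (2*(x+1)+1))"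
proof -
  have a: "2*x+1 > 0" "2*x+3>0" "x+1>0" using assms by auto
  have "(P * F^4 / (G^2 * (2*x+1))) * ((4*(x+1)^2) / ((2*x+1)*(2*x+3))) =
     (P * F^4 * (4*(x+1)^2)) / ((G^2 * (2*x+1)) * ((2*x+1)*(2*x+3)))"
    by (rule times_divide_times_eq)
  also have "\<dots> = P * 16 * ((x+1)*F)^4 / ((G*(2*x+1)*(2*x+2))^2 * (2*(x+1)+1))"
    apply (subst frac_eq_eq)
    using a assms(2) apply (auto simp: mult_pos_pos)[2]
    by algebra
  finally show ?thesis .
qed

lemma wallis_closed:
  "(\<Prod>k=1..n. (4*real k^2) / (4*real k^2 - 1)) = 2^(4*n) * (fact n)^4 / ((fact (2*n))^2 * (2*real n+1))"
proof (induction n)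
  case 0 then show ?case by simp
next
  case (Suc n)
  have e: "fact (2 * Suc n) = (fact (2*n) :: real) * (2*real n+1) * (2*real n+2)"
    by (simp add: algebra_simps)
  have d: "4*(real n + 1)^2 - 1 = (2*real n+1)*(2*real n+3)" by (simp add: algebra_simps power2_eq_square)
  have f: "(fact (Suc n) :: real) = (real n + 1) * fact n" by simp
  have p: "(2::real)^(4*Suc n) = 2^(4*n) * 16" by (simp add: power_add)
  have w: "real (Suc n) = real n + 1" by simp
  have "(\<Prod>k=1..Suc n. (4*real k^2) / (4*real k^2 - 1)) =
        (\<Prod>k=1..n. (4*real k^2) / (4*real k^2 - 1)) * ((4*real (Suc n)^2) / (4*real (Suc n)^2 - 1))"
    by simp
  also have "\<dots> = 2^(4*n) * (fact n)^4 / ((fact (2*n))^2 * (2*real n+1)) * ((4*real (Suc n)^2) / (4*real (Suc n)^2 - 1))"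
    using Suc by simp
  also have "\<dots> = 2^(4*Suc n) * (fact (Suc n))^4 / ((fact (2*Suc n))^2 * (2*real (Suc n)+1))"
    unfolding e f p w d using wallis_step_aux[of "real n" "fact (2*n)" "2^(4*n)" "fact n"]
    by (simp add: mult.commute)
  finally show ?case .
qed

lemma fact_hG: "n > 0 \<Longrightarrow> fact n = hG (real n) * real n powr (real n + 1/2) / exp (real n)"
proof -
  assume n: "n > 0"
  have "fact n = Gamma (real n + 1)" using Gamma_fact[where 'a=real, of n] by (simp add: add.commute)
  also have "\<dots> = real n * Gamma (real n)" using n by (subst Gamma_plus1) (auto simp: nonpos_Ints_def)
  also have "real n powr (real n + 1/2) = real n * real n powr (real n - 1/2)"
  proof -
    have "real n + 1/2 = 1 + (real n - 1/2)" by simp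
    thus ?thesis using n by (simp only: powr_add) simp
  qed
  ultimately show ?thesis using n unfolding hG_def by simp
qed

lemma W_hG:
  assumes n: "n > 0"
  shows "(\<Prod>k=1..n. (4*real k^2) / (4*real k^2 - 1)) =
         hG (real n)^4 * real n / (2 * hG (2 * real n)^2 * (2*real n+1))"
proof -
  define A where "A = real n powr (real n + 1/2)"
  define B where "B = (2*real n) powr (2*real n + 1/2)"
  have Apos: "A > 0" and Bpos: "B > 0" using n by (auto simp: A_def B_def)
  have "A^4 = real n powr (4*real n+2)" unfolding A_def using n
    by (subst powr_power) (auto simp: algebra_simps)
  also have "\<dots> = real n powr 1 * real n powr (4*real n+1)"
    by (subst powr_add[symmetric]) (simp add: algebra_simps)
  finally have A4: "A^4 = real n * real n powr (4*real n+1)" using n by simp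
  have "B^2 = (2*real n) powr (4*real n+1)" unfolding B_def using n
    by (subst powr_power) (auto simp: algebra_simps)
  also have "\<dots> = 2 powr (4*real n+1) * real n powr (4*real n+1)"
    using n by (subst powr_mult) auto
  also have "2 powr (4*real n+1) = 2^(4*n+1)"
    using powr_realpow[of 2 "4*n+1"] by (simp add: add.commute)
  finally have B2: "B^2 = 2^(4*n+1) * real n powr (4*real n+1)" .
  have B2': "B^2 * real n = 2^(4*n+1) * A^4" using A4 B2 by (simp add: algebra_simps)
  have f1: "fact n = hG (real n) * A / exp (real n)" unfolding A_def using fact_hG[OF n] .
  have f2: "fact (2*n) = hG (2*real n) * B / exp (2*real n)" unfolding B_def using fact_hG[of "2*n"] n by simp
  have h1: "hG (real n) > 0" "hG (2*real n) > 0" using n by (auto intro!: hG_pos)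
  have "(\<Prod>k=1..n. (4*real k^2) / (4*real k^2 - 1)) = 2^(4*n) * (fact n)^4 / ((fact (2*n))^2 * (2*real n+1))"
    by (rule wallis_closed)
  also have "\<dots> = 2^(4*n) * (hG (real n) * A)^4 / ((hG (2*real n) * B)^2 * (2*real n+1))"
    unfolding f1 f2 by (simp add: power_divide exp_of_nat_mult[symmetric] power_mult_distrib field_simps
      flip: exp_of_nat_mult)
  also have "\<dots> = hG (real n)^4 * real n / (2 * hG (2 * real n)^2 * (2*real n+1))"
  proof -
    define Q where "Q = (2::real)^(4*n)"
    have B3: "B^2 * real n = 2 * Q * A^4" using B2' by (simp add: Q_def power_add)
    show ?thesis unfolding Q_def[symmetric]
    apply (subst frac_eq_eq)
    using Apos Bpos h1 n apply (auto)[2]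
    using B3 by algebra
  qed
  finally show ?thesis .
qed

lemma hG_nat_lim: "(\<lambda>m. hG (real m + 1)) \<longlonglongrightarrow> sqrt (2*pi)"
proof -
  define a where "a m = hG (real m + 1)" for m
  have dec: "decseq a"
  proof (rule decseq_SucI)
    fix n
    have "hG ((real n + 1) + 1) \<le> hG (real n + 1)" by (rule hG_step_le) simp
    thus "a (Suc n) \<le> a n" unfolding a_def by (simp add: add.commute)
  qed
  have pos: "\<And>m. a m > 0" unfolding a_def by (intro hG_pos) simp
  obtain L where L: "a \<longlonglongrightarrow> L" "\<forall>i. L \<le> a i"
    using decseq_convergent[OF dec, of 0] pos less_imp_le by blast
  have lb: "hG 1 * exp (- 1/4) \<le> a m" for m
  proof -
    have "hG 1 * exp (- 1/(4*1)) \<le> hG (1 + real m) * exp (- 1/(4*(1 + real m)))"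
      by (rule hG_iter_ge) simp
    also have "\<dots> \<le> hG (1 + real m) * 1"
      by (intro mult_left_mono less_imp_le[OF hG_pos]) auto
    finally show ?thesis by (simp add: a_def add.commute)
  qed
  have Lpos: "L > 0"
  proof -
    have "hG 1 * exp (- 1/4) \<le> L" using L(1) lb by (intro LIMSEQ_le_const) auto
    moreover have "hG 1 * exp (- 1/4) > 0" using hG_pos[of 1] by simp
    ultimately show ?thesis by simp
  qed
  define W where "W n = (\<Prod>k=1..n. (4*real k^2) / (4*real k^2 - 1))" for n
  have WS: "(\<lambda>m. W (Suc m)) \<longlonglongrightarrow> pi/2"
    using wallis unfolding W_def by (rule LIMSEQ_Suc)
  have Weq: "W (Suc m) = a m ^ 4 * (real m + 1) / (2 * a (2*m+1) ^ 2 * (2*real m + 3))" for m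
  proof -
    have "W (Suc m) = hG (real (Suc m))^4 * real (Suc m) / (2 * hG (2 * real (Suc m))^2 * (2*real (Suc m)+1))"
      unfolding W_def by (rule W_hG) simp
    moreover have "2 * real (Suc m) = real (2*m+1) + 1" by simp
    ultimately show ?thesis by (simp add: a_def add.commute)
  qed
  have sub: "(\<lambda>m. a (2*m+1)) \<longlonglongrightarrow> L"
  proof -
    have "strict_mono (\<lambda>m::nat. 2*m+1)" by (rule strict_monoI) simp
    from LIMSEQ_subseq_LIMSEQ[OF L(1) this] show ?thesis by (simp add: o_def)
  qed
  have fr: "(\<lambda>m. (real m + 1) / (2*real m + 3)) \<longlonglongrightarrow> 1/2" by real_asymp
  have "(\<lambda>m. a m ^ 4 * ((real m + 1) / (2*real m + 3)) / (2 * a (2*m+1) ^ 2)) \<longlonglongrightarrow> L^4 * (1/2) / (2 * L^2)"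
    using Lpos by (intro tendsto_intros L(1) sub fr) auto
  moreover have "(\<lambda>m. a m ^ 4 * ((real m + 1) / (2*real m + 3)) / (2 * a (2*m+1) ^ 2)) = (\<lambda>m. W (Suc m))"
    by (rule ext) (simp add: Weq)
  ultimately have "(\<lambda>m. W (Suc m)) \<longlonglongrightarrow> L^4 * (1/2) / (2 * L^2)" by simp
  with WS have "pi/2 = L^4 * (1/2) / (2 * L^2)" by (rule LIMSEQ_unique)
  hence "L^2 = 2*pi" using Lpos by (simp add: field_simps power2_eq_square power4_eq_xxxx)
  hence "L = sqrt (2*pi)" using Lpos by (metis abs_of_pos real_sqrt_abs)
  thus ?thesis using L(1) unfolding a_def by simp
qed

lemma hG_int_lower: "sqrt (2*pi) \<le> hG (real n + 1)"
proof -
  have "(\<lambda>m. hG (real (m + n) + 1)) \<longlonglongrightarrow> sqrt (2*pi)"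
    using LIMSEQ_ignore_initial_segment[OF hG_nat_lim, of n] by simp
  moreover have "hG (real (m + n) + 1) \<le> hG (real n + 1)" for m
    using hG_iter_le[of "real n + 1" m] by (simp add: algebra_simps)
  ultimately show ?thesis by (intro LIMSEQ_le_const2) auto
qed

lemma Gamma_half_step:
  assumes N: "N \<ge> (1::real)"
  shows "hG N * exp (- 1/(4*N)) \<le> hG (N + 1/2)"
proof -
  have Npos: "N > 0" using N by simp
  have cv: "(ln \<circ> Gamma) ((1 - 1/2) *\<^sub>R (N + 1/2) + (1/2) *\<^sub>R (N + 3/2))
            \<le> (1 - 1/2) * (ln \<circ> Gamma) (N + 1/2) + (1/2) * (ln \<circ> Gamma) (N + 3/2)"
    by (rule convex_onD[OF log_convex_Gamma_real]) (use Npos in auto)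
  have e1: "(1 - 1/2) *\<^sub>R (N + 1/2) + (1/2) *\<^sub>R (N + 3/2) = N + 1" by (simp add: field_simps)
  have g1: "Gamma (N + 1) = N * Gamma N" using Npos by (subst Gamma_plus1) (auto simp: nonpos_Ints_def)
  have g2: "Gamma (N + 3/2) = (N + 1/2) * Gamma (N + 1/2)"
    using Gamma_plus1[of "N + 1/2"] Npos by (simp add: nonpos_Ints_def add.assoc)
  have GN: "Gamma N > 0" and GH: "Gamma (N + 1/2) > 0" using Npos by (auto intro!: Gamma_real_pos)
  have l1: "ln (Gamma (N + 1)) = ln N + ln (Gamma N)" unfolding g1 using Npos GN by (rule ln_mult_pos)
  have l2: "ln (Gamma (N + 3/2)) = ln (N + 1/2) + ln (Gamma (N + 1/2))" unfolding g2 using Npos GH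
    by (intro ln_mult_pos) auto
  from cv have conv: "ln N + ln (Gamma N) \<le> ln (Gamma (N + 1/2)) + ln (N + 1/2) / 2"
    unfolding e1 o_def using l1 l2 by (simp add: field_simps)
  have lnb: "ln (N + 1/2) - ln N \<le> (1/2) * (inverse N + inverse (N + 1/2)) / 2"
    using ln_inverse_approx_le[of N "1/2"] Npos by simp
  have "(N + 1/2) * (ln (N + 1/2) - ln N) \<le> (N + 1/2) * ((1/2) * (inverse N + inverse (N + 1/2)) / 2)"
    using lnb Npos by (intro mult_left_mono) auto
  also have "\<dots> = (1/4)*((N + 1/2) * inverse N) + (1/4) * ((N + 1/2) * inverse (N + 1/2))"
    by (simp add: algebra_simps)
  also have "(N + 1/2) * inverse (N + 1/2) = 1" using Npos by simp
  also have "(N + 1/2) * inverse N = 1 + 1/(2*N)" using Npos by (simp add: field_simps)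
  also have "(1/4)*(1 + 1/(2*N)) + (1/4) * 1 = 1/2 + 1/(8*N)" using Npos by (simp add: field_simps)
  finally have lnb2: "(N + 1/2) * (ln (N + 1/2) - ln N) \<le> 1/2 + 1/(8*N)" .
  have h1: "ln (hG N) = ln (Gamma N) + N - (N - 1/2) * ln N" using Npos by (rule ln_hG)
  have h2: "ln (hG (N + 1/2)) = ln (Gamma (N + 1/2)) + (N + 1/2) - ((N + 1/2) - 1/2) * ln (N + 1/2)"
    using Npos by (intro ln_hG) simp
  have "1/(8*N) \<le> 1/(4*N)" using Npos by (simp add: field_simps)
  hence "ln (hG N) - 1/(4*N) \<le> ln (hG (N + 1/2))"
    using conv lnb2 h1 h2 by (simp add: algebra_simps)
  hence "exp (ln (hG N) - 1/(4*N)) \<le> exp (ln (hG (N + 1/2)))" by simp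
  moreover have "exp (ln (hG N) - 1/(4*N)) = hG N * exp (- 1/(4*N))"
    using exp_ln_minus[OF hG_pos[OF Npos], of "1/(4*N)"] by simp
  ultimately show ?thesis using hG_pos[of "N + 1/2"] Npos by simp
qed

lemma hG_half_lower: "sqrt (2*pi) \<le> hG (real n + 3/2)"
proof -
  define N where "N m = real (m + n) + 1" for m
  have lim: "(\<lambda>m. hG (N m) * exp (- 1/(4 * N m))) \<longlonglongrightarrow> sqrt (2*pi) * 1"
  proof (intro tendsto_intros)
    show "(\<lambda>m. hG (N m)) \<longlonglongrightarrow> sqrt (2*pi)"
      using LIMSEQ_ignore_initial_segment[OF hG_nat_lim, of n] by (simp add: N_def)
    have "(\<lambda>m. exp (- 1/(4 * (real m + (real n + 1))))) \<longlonglongrightarrow> 1" by real_asymp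
    thus "(\<lambda>m. exp (- 1/(4 * N m))) \<longlonglongrightarrow> 1" by (simp add: N_def algebra_simps)
  qed
  have "hG (N m) * exp (- 1/(4 * N m)) \<le> hG (real n + 3/2)" for m
  proof -
    have "hG (N m) * exp (- 1/(4 * N m)) \<le> hG (N m + 1/2)"
      by (rule Gamma_half_step) (simp add: N_def)
    also have "N m + 1/2 = (real n + 3/2) + real m" by (simp add: N_def)
    also have "hG \<dots> \<le> hG (real n + 3/2)" by (rule hG_iter_le) simp
    finally show ?thesis .
  qed
  with lim show ?thesis by (intro LIMSEQ_le_const2[where X="\<lambda>m. hG (N m) * exp (- 1/(4 * N m))"]) auto
qed

lemma hG_lower:
  assumes "k \<ge> (2::nat)"
  shows "sqrt (2*pi) \<le> hG (real k / 2)"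
proof (cases "even k")
  case True
  define m where "m = k div 2 - 1"
  have "k = 2*(m+1)" using True assms unfolding m_def by presburger
  hence e: "real k / 2 = real m + 1" by simp
  show ?thesis unfolding e by (rule hG_int_lower)
next
  case False
  define m where "m = (k - 3) div 2"
  have "k = 2*m+3" using False assms unfolding m_def by presburger
  hence e: "real k / 2 = real m + 3/2" by simp
  show ?thesis unfolding e by (rule hG_half_lower)
qed

lemma hG_one: "hG 1 = exp 1" by (simp add: hG_def)

lemma hG_three_halves: "hG (3/2) = sqrt pi * exp (3/2) / 3"
proof -
  have "Gamma (3/2::real) = Gamma (1/2 + 1)" by simp
  also have "\<dots> = 1/2 * Gamma (1/2)" by (subst Gamma_plus1) (auto dest: nonpos_Ints_nonpos)
  finally have "Gamma (3/2::real) = sqrt pi / 2" by (simp add: Gamma_one_half_real)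
  thus ?thesis by (simp add: hG_def)
qed

lemma hG_base_upper: "hG 1 \<le> 2 * sqrt 2" "hG (3/2) \<le> 2 * sqrt 2"
proof -
  have s2: "2.82 \<le> 2 * sqrt (2::real)"
  proof -
    have "(2.82/2::real)^2 \<le> 2" by (simp add: power2_eq_square)
    hence "2.82/2 \<le> sqrt (2::real)" by (rule real_le_rsqrt)
    thus ?thesis by simp
  qed
  show "hG 1 \<le> 2 * sqrt 2" using e_less_272 s2 by (simp add: hG_one)
  have e3: "exp (3/2::real) ^ 2 \<le> 2.72^3"
  proof -
    have "exp (3/2::real) ^ 2 = exp 1 ^ 3" by (simp flip: exp_of_nat_mult)
    also have "\<dots> \<le> 2.72^3" using e_less_272 by (intro power_mono) auto
    finally show ?thesis .
  qed
  have "hG (3/2) ^ 2 = pi * exp (3/2) ^ 2 / 9" by (simp add: hG_three_halves power_divide power_mult_distrib)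
  also have "\<dots> \<le> 3.1416 * 2.72^3 / 9" using e3 pi_approx(2) by (intro divide_right_mono mult_mono) auto
  also have "\<dots> \<le> (2 * sqrt 2)^2" by (simp add: power3_eq_cube power_mult_distrib)
  finally show "hG (3/2) \<le> 2 * sqrt 2" by (rule power2_le_imp_le) simp
qed

lemma hG_upper:
  assumes "k \<ge> (2::nat)"
  shows "hG (real k / 2) \<le> 2 * sqrt 2"
proof (cases "even k")
  case True
  define m where "m = k div 2 - 1"
  have "k = 2*(m+1)" using True assms unfolding m_def by presburger
  hence e: "real k / 2 = 1 + real m" by simp
  show ?thesis unfolding e using hG_iter_le[of 1 m] hG_base_upper by simp
next
  case False
  define m where "m = (k - 3) div 2"
  have "k = 2*m+3" using False assms unfolding m_def by presburger
  hence e: "real k / 2 = 3/2 + real m" by simp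
  show ?thesis unfolding e using hG_iter_le[of "3/2" m] hG_base_upper by simp
qed

lemma chi2_nonneg: "chi2_density k t \<ge> 0"
proof (cases "k = 0")
  case True thus ?thesis by (simp add: chi2_density_def)
next
  case False
  hence "Gamma (real k / 2) > 0" by (intro Gamma_real_pos) simp
  thus ?thesis by (simp add: chi2_density_def)
qed

lemma chi2_measurable[measurable]: "chi2_density k \<in> borel_measurable borel"
  unfolding chi2_density_def by measurable

lemma chi2_pos_eq: "t > 0 \<Longrightarrow> chi2_density k t = t powr (real k / 2 - 1) * exp (- t / 2) / (2 powr (real k / 2) * Gamma (real k / 2))"
  by (simp add: chi2_density_def)

lemma chi2_nonpos: "t \<le> 0 \<Longrightarrow> chi2_density k t = 0"
  by (simp add: chi2_density_def)

lemma chi1_sq: "y > 0 \<Longrightarrow> chi2_density 1 (y^2) * (2*y) = 2 * std_normal_density y"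
proof -
  assume y: "y > 0"
  have "(y^2) powr (real 1 / 2 - 1) = (y powr 2) powr (- 1/2)"
    using y by (simp add: powr_realpow)
  also have "\<dots> = y powr (- 1)" by (simp add: powr_powr)
  also have "\<dots> = 1 / y" using y by (simp add: powr_minus_divide)
  finally have a: "(y^2) powr (real 1 / 2 - 1) = 1 / y" .
  have b: "2 powr (real 1 / 2) = sqrt 2" by (simp add: powr_half_sqrt)
  have c: "Gamma (real 1 / 2) = sqrt pi" by (simp add: Gamma_one_half_real)
  have "chi2_density 1 (y^2) = (1/y) * exp (- (y^2) / 2) / (sqrt 2 * sqrt pi)"
    using y unfolding chi2_pos_eq[of "y^2", OF zero_less_power[OF y]] a b c by simp
  also have "sqrt 2 * sqrt pi = sqrt (2 * pi)" by (simp add: real_sqrt_mult)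
  finally have "chi2_density 1 (y^2) = (1/y) * exp (- (y^2) / 2) / sqrt (2 * pi)" .
  thus ?thesis using y by (simp add: std_normal_density_def)
qed

lemma normal_sq_cdf:
  "(\<integral>\<^sup>+y. ennreal (std_normal_density y) * indicator {y. y^2 \<le> a} y \<partial>lborel) =
   (\<integral>\<^sup>+t. ennreal (chi2_density 1 t) * indicator {..a} t \<partial>lborel)"
proof (cases "a < 0")
  case True
  have "{y::real. y^2 \<le> a} = {}" using True by (auto simp: not_le intro: less_le_trans[OF True])
  moreover have "(\<integral>\<^sup>+t. ennreal (chi2_density 1 t) * indicator {..a} t \<partial>lborel) = 0"
    using True by (subst nn_integral_0_iff_AE) (auto simp: chi2_nonpos split: split_indicator)
  ultimately show ?thesis by simp
next
  case False
  hence a: "a \<ge> 0" by simp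
  define s where "s = sqrt a"
  have s: "s \<ge> 0" "s^2 = a" using a by (auto simp: s_def)
  let ?phi = std_normal_density
  have R1: "(\<integral>\<^sup>+t. ennreal (chi2_density 1 t) * indicator {..a} t \<partial>lborel) =
            (\<integral>\<^sup>+t. ennreal (chi2_density 1 t * indicator {0^2..s^2} t) \<partial>lborel)"
    using s by (intro nn_integral_cong) (auto simp: chi2_nonpos split: split_indicator)
  also have "\<dots> = (\<integral>\<^sup>+y. ennreal (chi2_density 1 (y^2) * (2*y) * indicator {0..s} y) \<partial>lborel)"
    by (rule nn_integral_substitution[where g="\<lambda>y. y^2" and g'="\<lambda>y. 2*y"])
       (unfold set_borel_measurable_def, measurable,
        auto intro!: derivative_eq_intros continuous_intros simp: s)
  also have "\<dots> = (\<integral>\<^sup>+y. ennreal (2 * ?phi y * indicator {0<..s} y) \<partial>lborel)"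
    by (intro nn_integral_cong) (auto simp: chi1_sq[unfolded One_nat_def] split: split_indicator)
  finally have R: "(\<integral>\<^sup>+t. ennreal (chi2_density 1 t) * indicator {..a} t \<partial>lborel) =
     (\<integral>\<^sup>+y. ennreal (2 * ?phi y * indicator {0<..s} y) \<partial>lborel)" .
  have L1: "(\<integral>\<^sup>+y. ennreal (?phi y) * indicator {y. y^2 \<le> a} y \<partial>lborel) =
     (\<integral>\<^sup>+y. ennreal (?phi y * indicator {-s..<0} y) + ennreal (?phi y * indicator {0..s} y) \<partial>lborel)"
  proof (intro nn_integral_cong)
    fix y :: real
    have "y^2 \<le> a \<longleftrightarrow> -s \<le> y \<and> y \<le> s"
      using s by (metis abs_le_iff abs_of_nonneg minus_le_iff power2_le_iff_abs_le)
    thus "ennreal (?phi y) * indicator {y. y^2 \<le> a} y =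
       ennreal (?phi y * indicator {-s..<0} y) + ennreal (?phi y * indicator {0..s} y)"
      by (auto split: split_indicator)
  qed
  also have "\<dots> = (\<integral>\<^sup>+y. ennreal (?phi y * indicator {-s..<0} y) \<partial>lborel) +
                  (\<integral>\<^sup>+y. ennreal (?phi y * indicator {0..s} y) \<partial>lborel)"
    by (rule nn_integral_add) auto
  also have "(\<integral>\<^sup>+y. ennreal (?phi y * indicator {-s..<0} y) \<partial>lborel) =
             (\<integral>\<^sup>+y. ennreal (?phi y * indicator {0<..s} y) \<partial>lborel)"
  proof -
    have "(\<integral>\<^sup>+y. ennreal (?phi y * indicator {-s..<0} y) \<partial>lborel) =
          ennreal \<bar>-1\<bar> * (\<integral>\<^sup>+y. ennreal (?phi (0 + (-1)*y) * indicator {-s..<0} (0 + (-1)*y)) \<partial>lborel)"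
      by (rule nn_integral_real_affine) auto
    also have "\<dots> = (\<integral>\<^sup>+y. ennreal (?phi y * indicator {0<..s} y) \<partial>lborel)"
      by (simp add: std_normal_density_def indicator_def conj_commute)
    finally show ?thesis .
  qed
  also have "(\<integral>\<^sup>+y. ennreal (?phi y * indicator {0..s} y) \<partial>lborel) =
             (\<integral>\<^sup>+y. ennreal (?phi y * indicator {0<..s} y) \<partial>lborel)"
    by (intro nn_integral_cong_AE) (auto intro!: AE_I[where N="{0}"] split: split_indicator)
  also have "(\<integral>\<^sup>+y. ennreal (?phi y * indicator {0<..s} y) \<partial>lborel) +
             (\<integral>\<^sup>+y. ennreal (?phi y * indicator {0<..s} y) \<partial>lborel) =
             (\<integral>\<^sup>+y. ennreal (?phi y * indicator {0<..s} y) + ennreal (?phi y * indicator {0<..s} y) \<partial>lborel)"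
    by (rule nn_integral_add[symmetric]) auto
  also have "\<dots> = (\<integral>\<^sup>+y. ennreal (2 * ?phi y * indicator {0<..s} y) \<partial>lborel)"
    by (intro nn_integral_cong) (simp add: ennreal_plus[symmetric] del: ennreal_plus)
  finally show ?thesis using R by simp
qed

lemma (in prob_space) chi1_distributed:
  assumes Z: "distributed M lborel Z std_normal_density"
  shows "distributed M lborel (\<lambda>\<omega>. (Z \<omega>)^2) (chi2_density 1)"
proof (rule distributedI_borel_atMost[where g="\<lambda>a. measure M {x\<in>space M. (Z x)^2 \<le> a}"])
  have Zm: "Z \<in> borel_measurable M" using distributed_measurable[OF Z] by simp
  show "(\<lambda>\<omega>. (Z \<omega>)^2) \<in> borel_measurable M" using Zm by measurable
  show "chi2_density 1 \<in> borel_measurable borel" by measurable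
  show "AE x in lborel. 0 \<le> chi2_density 1 x" by (simp add: chi2_nonneg)
  fix a :: real
  show "emeasure M {x\<in>space M. (Z x)^2 \<le> a} = ennreal (measure M {x\<in>space M. (Z x)^2 \<le> a})"
    by (simp add: emeasure_eq_measure)
  have "(\<integral>\<^sup>+t. ennreal (chi2_density 1 t * indicator {..a} t) \<partial>lborel) =
        (\<integral>\<^sup>+t. ennreal (chi2_density 1 t) * indicator {..a} t \<partial>lborel)"
    by (intro nn_integral_cong) (simp split: split_indicator)
  also have "\<dots> =
        (\<integral>\<^sup>+y. ennreal (std_normal_density y) * indicator {y. y^2 \<le> a} y \<partial>lborel)"
    by (rule normal_sq_cdf[symmetric])
  also have "\<dots> = emeasure M (Z -` {y. y^2 \<le> a} \<inter> space M)"
    by (rule distributed_emeasure[OF Z, symmetric]) measurable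
  also have "Z -` {y. y^2 \<le> a} \<inter> space M = {x\<in>space M. (Z x)^2 \<le> a}" by auto
  finally show "(\<integral>\<^sup>+t. ennreal (chi2_density 1 t * indicator {..a} t) \<partial>lborel) =
      ennreal (measure M {x\<in>space M. (Z x)^2 \<le> a})"
    by (simp add: emeasure_eq_measure)
qed

lemma beta_nn:
  assumes "a > 0" "b > (0::real)"
  shows "(\<integral>\<^sup>+v. ennreal (v powr (b - 1) * (1 - v) powr (a - 1) * indicator {0<..<1} v) \<partial>lborel) = ennreal (Beta b a)"
proof -
  have "(\<integral>\<^sup>+v. ennreal (v powr (b - 1) * (1 - v) powr (a - 1)) * indicator {0..1} v \<partial>lborel) = ennreal (Beta b a)"
    by (rule nn_integral_has_integral_lebesgue'[OF _ has_integral_Beta_real[OF assms(2,1)]]) auto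
  moreover have "(\<integral>\<^sup>+v. ennreal (v powr (b - 1) * (1 - v) powr (a - 1) * indicator {0<..<1} v) \<partial>lborel) =
    (\<integral>\<^sup>+v. ennreal (v powr (b - 1) * (1 - v) powr (a - 1)) * indicator {0..1} v \<partial>lborel)"
    by (intro nn_integral_cong) (auto split: split_indicator simp: less_le)
  ultimately show ?thesis by simp
qed

lemma conv_chi2:
  fixes a b :: nat
  assumes a: "a > 0" and b: "b > 0"
  shows "(\<lambda>x. \<integral>\<^sup>+y. ennreal (chi2_density a (x - y)) * ennreal (chi2_density b y) \<partial>lborel) =
         (\<lambda>x. ennreal (chi2_density (a + b) x))"
proof
  fix x :: real
  show "(\<integral>\<^sup>+y. ennreal (chi2_density a (x - y)) * ennreal (chi2_density b y) \<partial>lborel) =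
         ennreal (chi2_density (a + b) x)"
  proof (cases "x \<le> 0")
    case True
    have "(\<integral>\<^sup>+y. ennreal (chi2_density a (x - y)) * ennreal (chi2_density b y) \<partial>lborel) = 0"
    proof -
      have z: "ennreal (chi2_density a (x - y)) * ennreal (chi2_density b y) = 0" for y
      proof (cases "y \<le> 0")
        case True thus ?thesis by (simp add: chi2_nonpos)
      next
        case False thus ?thesis using \<open>x \<le> 0\<close> by (simp add: chi2_nonpos)
      qed
      show ?thesis by (simp only: z) simp
    qed
    thus ?thesis using True by (simp add: chi2_nonpos)
  next
    case False
    hence x: "x > 0" by simp
    define \<alpha> where "\<alpha> = real a / 2"
    define \<beta> where "\<beta> = real b / 2"
    have \<alpha>: "\<alpha> > 0" and \<beta>: "\<beta> > 0" using a b by (auto simp: \<alpha>_def \<beta>_def)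
    define C where "C = exp (- x / 2) / (2 powr \<alpha> * Gamma \<alpha> * (2 powr \<beta> * Gamma \<beta>))"
    have Cnn: "C \<ge> 0" using \<alpha> \<beta> Gamma_real_pos[OF \<alpha>] Gamma_real_pos[OF \<beta>] by (simp add: C_def)
    define F where "F y = C * ((x - y) powr (\<alpha> - 1) * y powr (\<beta> - 1)) * indicator {0<..<x} y" for y
    have step1: "(\<integral>\<^sup>+y. ennreal (chi2_density a (x - y)) * ennreal (chi2_density b y) \<partial>lborel) =
      (\<integral>\<^sup>+y. ennreal (F y) \<partial>lborel)"
    proof (intro nn_integral_cong)
      fix y :: real
      show "ennreal (chi2_density a (x - y)) * ennreal (chi2_density b y) = ennreal (F y)"
      proof (cases "0 < y \<and> y < x")
        case True
        have "exp (- (x - y) / 2) * exp (- y / 2) = exp (- x / 2)"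
          by (simp add: exp_add[symmetric] field_simps)
        hence "chi2_density a (x - y) * chi2_density b y = F y"
          using True unfolding F_def C_def \<alpha>_def[symmetric] \<beta>_def[symmetric]
          by (simp add: chi2_pos_eq \<alpha>_def[symmetric] \<beta>_def[symmetric] field_simps)
        thus ?thesis by (simp add: ennreal_mult[symmetric] chi2_nonneg)
      next
        case False
        hence "chi2_density a (x - y) = 0 \<or> chi2_density b y = 0" by (auto simp: chi2_nonpos)
        moreover have "F y = 0" using False by (simp add: F_def)
        ultimately show ?thesis by auto
      qed
    qed
    have Fm: "(\<lambda>y. ennreal (F y)) \<in> borel_measurable borel" unfolding F_def by measurable
    have step2: "(\<integral>\<^sup>+y. ennreal (F y) \<partial>lborel) = ennreal \<bar>x\<bar> * (\<integral>\<^sup>+v. ennreal (F (0 + x * v)) \<partial>lborel)"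
      by (rule nn_integral_real_affine[OF Fm]) (use x in simp)
    have step3: "ennreal (F (0 + x * v)) = ennreal (C * x powr (\<alpha> - 1) * x powr (\<beta> - 1)) *
         ennreal (v powr (\<beta> - 1) * (1 - v) powr (\<alpha> - 1) * indicator {0<..<1} v)" for v
    proof (cases "0 < v \<and> v < 1")
      case True
      have "(x - x * v) powr (\<alpha> - 1) = x powr (\<alpha> - 1) * (1 - v) powr (\<alpha> - 1)"
        using True x by (subst powr_mult[symmetric]) (auto simp: algebra_simps)
      moreover have "(x * v) powr (\<beta> - 1) = x powr (\<beta> - 1) * v powr (\<beta> - 1)"
        using True x by (subst powr_mult) auto
      moreover have "0 < x * v \<and> x * v < x" using True x by (auto simp: mult_less_cancel_left1)
      ultimately show ?thesis using True Cnn
        by (simp add: F_def ennreal_mult[symmetric] mult_nonneg_nonneg mult_ac)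
    next
      case False
      hence "\<not> (0 < x * v \<and> x * v < x)" using x
        by (auto simp: zero_less_mult_iff mult_less_cancel_left1)
      thus ?thesis using False by (simp add: F_def)
    qed
    have "(\<integral>\<^sup>+y. ennreal (chi2_density a (x - y)) * ennreal (chi2_density b y) \<partial>lborel) =
          ennreal x * (ennreal (C * x powr (\<alpha> - 1) * x powr (\<beta> - 1)) * ennreal (Beta \<beta> \<alpha>))"
      unfolding step1 step2 step3 using x
      by (subst nn_integral_cmult) (auto simp: beta_nn[OF \<alpha> \<beta>])
    also have "\<dots> = ennreal (x * (C * x powr (\<alpha> - 1) * x powr (\<beta> - 1)) * Beta \<beta> \<alpha>)"
      using x Cnn \<alpha> \<beta> Gamma_real_pos[OF \<alpha>] Gamma_real_pos[OF \<beta>] Gamma_real_pos[of "\<alpha>+\<beta>"]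
      by (simp add: ennreal_mult[symmetric] Beta_def)
    also have "x * (C * x powr (\<alpha> - 1) * x powr (\<beta> - 1)) * Beta \<beta> \<alpha> = chi2_density (a + b) x"
    proof -
      have e1: "real (a + b) / 2 = \<alpha> + \<beta>" by (simp add: \<alpha>_def \<beta>_def add_divide_distrib)
      have e2: "x * (x powr (\<alpha> - 1) * x powr (\<beta> - 1)) = x powr (\<alpha> + \<beta> - 1)"
        using x by (simp add: powr_add[symmetric] powr_mult_base algebra_simps)
      have e3: "2 powr (\<alpha> + \<beta>) = 2 powr \<alpha> * 2 powr \<beta>" by (simp add: powr_add)
      have g: "Gamma \<alpha> > 0" "Gamma \<beta> > 0" "Gamma (\<alpha> + \<beta>) > 0"
        using \<alpha> \<beta> by (auto intro!: Gamma_real_pos)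
      have "x * (C * x powr (\<alpha> - 1) * x powr (\<beta> - 1)) * Beta \<beta> \<alpha> =
            (x * (x powr (\<alpha> - 1) * x powr (\<beta> - 1))) * C * Beta \<beta> \<alpha>" by (simp add: mult_ac)
      also have "\<dots> = x powr (\<alpha> + \<beta> - 1) * exp (- x / 2) / (2 powr (\<alpha> + \<beta>) * Gamma (\<alpha> + \<beta>))"
        unfolding e2 e3 C_def Beta_def using g by (simp add: field_simps)
      also have "\<dots> = chi2_density (a + b) x" using x unfolding chi2_pos_eq[OF x] e1 by simp
      finally show ?thesis .
    qed
    finally show ?thesis .
  qed
qed

lemma (in prob_space) sum_indep_chi2:
  assumes indep: "indep_var borel X borel Y"
  assumes a: "a > 0" and b: "b > 0"
  assumes X: "distributed M lborel X (chi2_density a)"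
  assumes Y: "distributed M lborel Y (chi2_density b)"
  shows "distributed M lborel (\<lambda>x. X x + Y x) (chi2_density (a + b))"
proof -
  have "distributed M lborel (\<lambda>x. X x + Y x)
      (\<lambda>x. \<integral>\<^sup>+y. ennreal (chi2_density a (x - y)) * ennreal (chi2_density b y) \<partial>lborel)"
    by (rule distributed_convolution[OF indep X Y])
  thus ?thesis unfolding conv_chi2[OF a b] .
qed

lemma (in prob_space) chi2_sum:
  assumes indep: "indep_vars (\<lambda>_. borel) (\<lambda>j \<omega>. (z j \<omega>)^2) I"
  assumes dist: "\<And>i. i \<in> I \<Longrightarrow> distributed M lborel (z i) std_normal_density"
  assumes J: "finite J" "J \<noteq> {}" "J \<subseteq> I"
  shows "distributed M lborel (\<lambda>\<omega>. \<Sum>j\<in>J. (z j \<omega>)^2) (chi2_density (card J))"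
  using J
proof (induction rule: finite_ne_induct)
  case (singleton i)
  thus ?case using chi1_distributed[OF dist[of i]] by simp
next
  case (insert i J)
  have ind: "indep_var borel (\<lambda>\<omega>. (z i \<omega>)^2) borel (\<lambda>\<omega>. \<Sum>j\<in>J. (z j \<omega>)^2)"
    using indep_vars_sum[OF insert(1,3) indep_vars_subset[OF indep insert(5)]] by simp
  have "distributed M lborel (\<lambda>\<omega>. (z i \<omega>)^2 + (\<Sum>j\<in>J. (z j \<omega>)^2)) (chi2_density (1 + card J))"
    by (rule sum_indep_chi2[OF ind])
       (use insert chi1_distributed[OF dist[of i]] in \<open>auto simp: card_gt_0_iff\<close>)
  moreover have "(\<lambda>\<omega>. (z i \<omega>)^2 + (\<Sum>j\<in>J. (z j \<omega>)^2)) = (\<lambda>\<omega>. \<Sum>j\<in>insert i J. (z j \<omega>)^2)"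
    using insert by auto
  moreover have "1 + card J = card (insert i J)" using insert by simp
  ultimately show ?case by simp
qed

lemma (in prob_space) indep_blocks:
  fixes X :: "'i \<Rightarrow> 'a \<Rightarrow> real"
  assumes indep: "indep_vars (\<lambda>_. borel) X I"
  assumes AB: "finite A" "finite B" "A \<inter> B = {}" "A \<subseteq> I" "B \<subseteq> I"
  shows "indep_var borel (\<lambda>\<omega>. \<Sum>i\<in>A. X i \<omega>) borel (\<lambda>\<omega>. \<Sum>i\<in>B. X i \<omega>)"
proof -
  have "indep_var
    borel ((\<lambda>f. \<Sum>i\<in>A. f i) \<circ> (\<lambda>\<omega>. restrict (\<lambda>i. X i \<omega>) A))
    borel ((\<lambda>f. \<Sum>i\<in>B. f i) \<circ> (\<lambda>\<omega>. restrict (\<lambda>i. X i \<omega>) B))"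
    using AB by (intro indep_var_compose[OF indep_var_restrict[OF indep]]) auto
  also have "((\<lambda>f. \<Sum>i\<in>A. f i) \<circ> (\<lambda>\<omega>. restrict (\<lambda>i. X i \<omega>) A)) = (\<lambda>\<omega>. \<Sum>i\<in>A. X i \<omega>)"
    by (auto cong: rev_conj_cong)
  also have "((\<lambda>f. \<Sum>i\<in>B. f i) \<circ> (\<lambda>\<omega>. restrict (\<lambda>i. X i \<omega>) B)) = (\<lambda>\<omega>. \<Sum>i\<in>B. X i \<omega>)"
    by (auto cong: rev_conj_cong)
  finally show ?thesis .
qed

lemma exp_tail_nn:
  fixes l s :: real
  assumes l: "l > 0"
  shows "(\<integral>\<^sup>+y. ennreal (exp (- l * (y - s))) * indicator {s<..} y \<partial>lborel) = ennreal (1 / l)"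
proof -
  have "(\<integral>\<^sup>+y. ennreal (exp (- l * (y - s))) * indicator {s..} y \<partial>lborel) = ennreal (0 - (- exp (- l * (s - s)) / l))"
  proof (rule nn_integral_FTC_atLeast[where F="\<lambda>y. - exp (- l * (y - s)) / l" and T=0 and f = "\<lambda>y. exp (-l*(y-s))"])
    show "(\<lambda>y. exp (- l * (y - s))) \<in> borel_measurable borel" by measurable
    fix x :: real
    show "((\<lambda>y. - exp (- l * (y - s)) / l) has_real_derivative exp (- l * (x - s))) (at x)"
      using l by (auto intro!: derivative_eq_intros simp: field_simps)
    show "0 \<le> exp (- l * (x - s))" by simp
  next
    have "((\<lambda>y. exp (- l * (y - s))) \<longlongrightarrow> 0) at_top"
      using l by real_asymp
    hence "((\<lambda>y. - exp (- l * (y - s)) / l) \<longlongrightarrow> - 0 / l) at_top"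
      using l by (intro tendsto_intros) auto
    thus "((\<lambda>y. - exp (- l * (y - s)) / l) \<longlongrightarrow> 0) at_top" by simp
  qed
  moreover have "(\<integral>\<^sup>+y. ennreal (exp (- l * (y - s))) * indicator {s<..} y \<partial>lborel) =
     (\<integral>\<^sup>+y. ennreal (exp (- l * (y - s))) * indicator {s..} y \<partial>lborel)"
    by (intro nn_integral_cong_AE) (auto intro!: AE_I[where N="{s}"] split: split_indicator)
  ultimately show ?thesis by simp
qed

lemma tail_lower:
  assumes k: "k \<ge> 2" and s: "s > 0"
  shows "ennreal (2 * chi2_density k s) \<le> (\<integral>\<^sup>+y. ennreal (chi2_density k y) * indicator {s<..} y \<partial>lborel)"
proof -
  define \<alpha> where "\<alpha> = real k / 2"
  have \<alpha>: "\<alpha> \<ge> 1" using k by (simp add: \<alpha>_def)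
  define c where "c = 1 / (2 powr \<alpha> * Gamma \<alpha>)"
  have c: "c > 0" using \<alpha> by (auto simp: c_def intro!: Gamma_real_pos)
  define D where "D = c * s powr (\<alpha> - 1) * exp (- s / 2)"
  have D: "D \<ge> 0" using c by (simp add: D_def)
  have chi_eq: "chi2_density k y = c * y powr (\<alpha> - 1) * exp (- y / 2)" if "y > 0" for y
    using that by (simp add: chi2_pos_eq c_def \<alpha>_def)
  have pt: "ennreal D * (ennreal (exp (- (1/2) * (y - s))) * indicator {s<..} y) \<le>
            ennreal (chi2_density k y) * indicator {s<..} y" for y
  proof (cases "y > s")
    case True
    have "s powr (\<alpha> - 1) \<le> y powr (\<alpha> - 1)" using True s \<alpha> by (intro powr_mono2) auto
    hence "c * s powr (\<alpha> - 1) * exp (- y / 2) \<le> c * y powr (\<alpha> - 1) * exp (- y / 2)"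
      using c by (intro mult_right_mono mult_left_mono) auto
    moreover have "D * exp (- (1/2) * (y - s)) = c * s powr (\<alpha> - 1) * exp (- y / 2)"
      unfolding D_def by (simp add: mult.assoc exp_add[symmetric] field_simps)
    ultimately have "D * exp (- (1/2) * (y - s)) \<le> chi2_density k y"
      using chi_eq[of y] True s by simp
    thus ?thesis using True D by (simp add: ennreal_mult[symmetric] ennreal_leI)
  qed simp
  have "(\<integral>\<^sup>+y. ennreal D * (ennreal (exp (- (1/2) * (y - s))) * indicator {s<..} y) \<partial>lborel) =
        ennreal D * (\<integral>\<^sup>+y. ennreal (exp (- (1/2) * (y - s))) * indicator {s<..} y \<partial>lborel)"
    by (rule nn_integral_cmult) measurable
  also have "\<dots> = ennreal D * ennreal (1 / (1/2))" by (simp only: exp_tail_nn[of "1/2"] zero_less_divide_iff zero_less_one zero_less_numeral simp_thms)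
  also have "ennreal D * ennreal (1 / (1/2)) = ennreal (D * (1 / (1/2)))"
    using D by (rule ennreal_mult[symmetric]) simp
  also have "D * (1 / (1/2)) = 2 * chi2_density k s"
    using s by (simp add: chi_eq D_def)
  finally have eq: "(\<integral>\<^sup>+y. ennreal D * (ennreal (exp (- (1/2) * (y - s))) * indicator {s<..} y) \<partial>lborel) =
        ennreal (2 * chi2_density k s)" .
  have mono: "(\<integral>\<^sup>+y. ennreal D * (ennreal (exp (- (1/2) * (y - s))) * indicator {s<..} y) \<partial>lborel) \<le>
     (\<integral>\<^sup>+y. ennreal (chi2_density k y) * indicator {s<..} y \<partial>lborel)"
    by (intro nn_integral_mono pt)
  show ?thesis using ord_eq_le_trans[OF eq[symmetric] mono] .
qed

lemma tail_upper:
  assumes k: "k \<ge> 2" and s: "s > 0" and sk: "s > real k - 2"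
  shows "(\<integral>\<^sup>+y. ennreal (chi2_density k y) * indicator {s<..} y \<partial>lborel)
          \<le> ennreal (2 * chi2_density k s * s / (s - real k + 2))"
proof -
  define \<alpha> where "\<alpha> = real k / 2"
  have \<alpha>: "\<alpha> \<ge> 1" using k by (simp add: \<alpha>_def)
  define c where "c = 1 / (2 powr \<alpha> * Gamma \<alpha>)"
  have c: "c > 0" using \<alpha> by (auto simp: c_def intro!: Gamma_real_pos)
  define D where "D = c * s powr (\<alpha> - 1) * exp (- s / 2)"
  have D: "D \<ge> 0" using c by (simp add: D_def)
  define l where "l = 1/2 - (\<alpha> - 1) / s"
  have l: "l > 0" using sk s unfolding l_def \<alpha>_def by (simp add: field_simps)
  have chi_eq: "chi2_density k y = c * y powr (\<alpha> - 1) * exp (- y / 2)" if "y > 0" for y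
    using that by (simp add: chi2_pos_eq c_def \<alpha>_def)
  have pt: "ennreal (chi2_density k y) * indicator {s<..} y \<le>
            ennreal D * (ennreal (exp (- l * (y - s))) * indicator {s<..} y)" for y
  proof (cases "y > s")
    case True
    hence y: "y > 0" using s by simp
    have "ln (y / s) \<le> y / s - 1" using y s by (intro ln_le_minus_one) auto
    hence "ln y \<le> ln s + (y / s - 1)" using y s by (simp add: ln_div)
    hence "(\<alpha> - 1) * ln y \<le> (\<alpha> - 1) * (ln s + (y / s - 1))" using \<alpha> by (intro mult_left_mono) auto
    hence "exp ((\<alpha> - 1) * ln y) \<le> exp ((\<alpha> - 1) * (ln s + (y / s - 1)))" by simp
    also have "exp ((\<alpha> - 1) * (ln s + (y / s - 1))) = s powr (\<alpha> - 1) * exp ((\<alpha> - 1) * (y / s - 1))"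
      using s by (simp add: powr_def distrib_left exp_add mult.commute)
    finally have "y powr (\<alpha> - 1) \<le> s powr (\<alpha> - 1) * exp ((\<alpha> - 1) * (y / s - 1))"
      using y by (simp add: powr_def mult.commute)
    hence "c * y powr (\<alpha> - 1) * exp (- y / 2) \<le> c * (s powr (\<alpha> - 1) * exp ((\<alpha> - 1) * (y / s - 1))) * exp (- y / 2)"
      using c by (intro mult_right_mono mult_left_mono) auto
    also have "\<dots> = D * exp (- l * (y - s))"
    proof -
      have "(\<alpha> - 1) * (y / s - 1) + - y / 2 = - s / 2 + - l * (y - s)"
        using s unfolding l_def by (simp add: field_simps)
      hence "exp ((\<alpha> - 1) * (y / s - 1)) * exp (- y / 2) = exp (- s / 2) * exp (- l * (y - s))"
        by (simp add: exp_add[symmetric])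
      thus ?thesis unfolding D_def by (simp add: mult_ac)
    qed
    finally have "chi2_density k y \<le> D * exp (- l * (y - s))" using chi_eq[OF y] by simp
    thus ?thesis using True D by (simp add: ennreal_mult[symmetric])
  qed simp
  have "(\<integral>\<^sup>+y. ennreal D * (ennreal (exp (- l * (y - s))) * indicator {s<..} y) \<partial>lborel) =
        ennreal D * (\<integral>\<^sup>+y. ennreal (exp (- l * (y - s))) * indicator {s<..} y \<partial>lborel)"
    by (rule nn_integral_cmult) measurable
  also have "\<dots> = ennreal D * ennreal (1 / l)" by (simp only: exp_tail_nn[OF l])
  also have "ennreal D * ennreal (1 / l) = ennreal (2 * chi2_density k s * s / (s - real k + 2))"
  proof -
    have "1 / l = 2 * s / (s - real k + 2)"
      using s sk unfolding l_def \<alpha>_def by (simp add: field_simps)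
    have "ennreal D * ennreal (1 / l) = ennreal (D * (1 / l))"
      using D l by (simp add: ennreal_mult[symmetric])
    also have "D * (1 / l) = 2 * chi2_density k s * s / (s - real k + 2)"
      unfolding \<open>1 / l = _\<close> using s by (simp add: chi_eq D_def)
    finally show ?thesis .
  qed
  finally have eq: "(\<integral>\<^sup>+y. ennreal D * (ennreal (exp (- l * (y - s))) * indicator {s<..} y) \<partial>lborel) =
        ennreal (2 * chi2_density k s * s / (s - real k + 2))" .
  have mono: "(\<integral>\<^sup>+y. ennreal (chi2_density k y) * indicator {s<..} y \<partial>lborel) \<le>
     (\<integral>\<^sup>+y. ennreal D * (ennreal (exp (- l * (y - s))) * indicator {s<..} y) \<partial>lborel)"
    by (intro nn_integral_mono pt)
  show ?thesis using ord_le_eq_trans[OF mono eq] .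
qed

lemma gamma_const_id:
  assumes k: "k \<ge> (1::nat)"
  shows "exp (real k / 2) * 2 powr (real k / 2) * Gamma (real k / 2) =
         hG (real k / 2) * sqrt 2 * (real k) powr ((real k - 1) / 2)"
proof -
  define \<alpha> where "\<alpha> = real k / 2"
  have \<alpha>: "\<alpha> > 0" using k by (simp add: \<alpha>_def)
  have kk: "real k = 2 * \<alpha>" by (simp add: \<alpha>_def)
  have e1: "(real k - 1) / 2 = \<alpha> - 1/2" by (simp add: \<alpha>_def field_simps)
  have e2: "(2 * \<alpha>) powr (\<alpha> - 1/2) = 2 powr (\<alpha> - 1/2) * \<alpha> powr (\<alpha> - 1/2)"
    using \<alpha> by (simp add: powr_mult)
  have e3: "2 powr \<alpha> = 2 powr (\<alpha> - 1/2) * sqrt 2"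
    by (simp add: powr_half_sqrt[symmetric] powr_add[symmetric])
  have e4: "Gamma \<alpha> * exp \<alpha> = hG \<alpha> * \<alpha> powr (\<alpha> - 1/2)"
    using \<alpha> by (simp add: hG_def)
  show ?thesis unfolding \<alpha>_def[symmetric] e1 unfolding kk e2 e3
    using e4 by (simp add: mult_ac)
qed

lemma pw_lower:
  fixes b k :: nat and R t K :: real
  assumes b: "b \<ge> 1" and k: "k \<ge> 2" and t: "0 < t" "t < R"
  assumes K: "K = exp (- (R - real k) / 2) /
             (2 powr (real b / 2) * sqrt pi * real k powr ((real k - 1) / 2) * Gamma (real b / 2))"
  shows "sqrt pi * K / 2 * ((R - t) powr (real k / 2 - 1) * t powr (real b / 2 - 1))
         \<le> chi2_density b t * (2 * chi2_density k (R - t))"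
proof -
  define s where "s = R - t"
  have s: "s > 0" using t by (simp add: s_def)
  define P where "P = real k powr ((real k - 1) / 2)"
  define E where "E = exp (real k / 2) * 2 powr (real k / 2) * Gamma (real k / 2)"
  define H where "H = hG (real k / 2)"
  have P: "P > 0" using k by (simp add: P_def)
  have Gk: "Gamma (real k / 2) > 0" and Gb: "Gamma (real b / 2) > 0"
    using k b by (auto intro!: Gamma_real_pos)
  have E: "E > 0" using Gk by (simp add: E_def)
  have EP: "E = H * sqrt 2 * P" unfolding E_def H_def P_def using k by (intro gamma_const_id) simp
  have H: "H \<le> 2 * sqrt 2" unfolding H_def by (rule hG_upper[OF k])
  have E4: "E \<le> 4 * P"
  proof -
    have "H * sqrt 2 \<le> 2 * sqrt 2 * sqrt 2" using H by (intro mult_right_mono) auto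
    also have "\<dots> = 4" by simp
    finally show ?thesis unfolding EP using P by (simp add: mult_right_mono)
  qed
  define X where "X = exp (real k / 2) * exp (- R / 2) * s powr (real k / 2 - 1) * t powr (real b / 2 - 1) /
                      (2 powr (real b / 2) * Gamma (real b / 2))"
  have X: "X \<ge> 0" using Gb by (simp add: X_def)
  have ex1: "exp (- (R - real k) / 2) = exp (real k / 2) * exp (- R / 2)"
    by (simp add: exp_add[symmetric] field_simps)
  have ex2: "exp (- t / 2) * exp (- s / 2) = exp (- R / 2)"
    by (simp add: exp_add[symmetric] s_def field_simps)
  have L: "sqrt pi * K / 2 * (s powr (real k / 2 - 1) * t powr (real b / 2 - 1)) = X / (2 * P)"
    unfolding K ex1 X_def P_def by (simp add: field_simps)
  have "chi2_density b t * (2 * chi2_density k s) =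
        2 * (t powr (real b / 2 - 1) * s powr (real k / 2 - 1) * (exp (- t / 2) * exp (- s / 2))) /
        (2 powr (real b / 2) * Gamma (real b / 2) * (2 powr (real k / 2) * Gamma (real k / 2)))"
    using s t by (simp add: chi2_pos_eq field_simps)
  also have "\<dots> = 2 * X / E"
    unfolding ex2 X_def E_def using Gk Gb by (simp add: field_simps)
  finally have Rr: "chi2_density b t * (2 * chi2_density k s) = 2 * X / E" .
  have "X / (2 * P) = 2 * X / (4 * P)" by simp
  also have "\<dots> \<le> 2 * X / E" using X E E4 by (intro divide_left_mono) auto
  finally show ?thesis using L Rr unfolding s_def by simp
qed

lemma pw_upper:
  fixes b k :: nat and R t K :: real
  assumes b: "b \<ge> 1" and k: "k \<ge> 2" and t: "0 < t" "t < R" and sk: "R - t > real k - 2"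
  assumes K: "K = exp (- (R - real k) / 2) /
             (2 powr (real b / 2) * sqrt pi * real k powr ((real k - 1) / 2) * Gamma (real b / 2))"
  shows "chi2_density b t * (2 * chi2_density k (R - t) * (R - t) / ((R - t) - real k + 2))
         \<le> K * (t powr (real b / 2 - 1) * (R - t) powr (real k / 2) / (R - real k + 2 - t))"
proof -
  define s where "s = R - t"
  have s: "s > 0" using t by (simp add: s_def)
  have d: "s - real k + 2 > 0" using sk by (simp add: s_def)
  define P where "P = real k powr ((real k - 1) / 2)"
  define E where "E = exp (real k / 2) * 2 powr (real k / 2) * Gamma (real k / 2)"
  define H where "H = hG (real k / 2)"
  have P: "P > 0" using k by (simp add: P_def)
  have Gk: "Gamma (real k / 2) > 0" and Gb: "Gamma (real b / 2) > 0"
    using k b by (auto intro!: Gamma_real_pos)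
  have E: "E > 0" using Gk by (simp add: E_def)
  have EP: "E = H * sqrt 2 * P" unfolding E_def H_def P_def using k by (intro gamma_const_id) simp
  have H: "sqrt (2*pi) \<le> H" unfolding H_def by (rule hG_lower[OF k])
  have E4: "2 * sqrt pi * P \<le> E"
  proof -
    have "2 * sqrt pi = sqrt (2*pi) * sqrt 2"
      by (simp add: real_sqrt_mult)
    also have "\<dots> \<le> H * sqrt 2" using H by (intro mult_right_mono) auto
    finally show ?thesis unfolding EP using P by (simp add: mult_right_mono)
  qed
  define X where "X = exp (real k / 2) * exp (- R / 2) * s powr (real k / 2) * t powr (real b / 2 - 1) /
                      (2 powr (real b / 2) * Gamma (real b / 2) * (s - real k + 2))"
  have X: "X \<ge> 0" using Gb d by (simp add: X_def)
  have ex1: "exp (- (R - real k) / 2) = exp (real k / 2) * exp (- R / 2)"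
    by (simp add: exp_add[symmetric] field_simps)
  have ex2: "exp (- t / 2) * exp (- s / 2) = exp (- R / 2)"
    by (simp add: exp_add[symmetric] s_def field_simps)
  have dd: "R - real k + 2 - t = s - real k + 2" by (simp add: s_def)
  have L: "K * (t powr (real b / 2 - 1) * s powr (real k / 2) / (R - real k + 2 - t)) = 2 * X / (2 * sqrt pi * P)"
  proof -
    define D where "D = s - real k + 2"
    have D: "D > 0" using d by (simp add: D_def)
    have sp: "sqrt pi > 0" by simp
    have tw: "2 powr (real b / 2) > 0" by simp
    show ?thesis unfolding K ex1 X_def P_def[symmetric] dd D_def[symmetric]
      using D P Gb sp tw by (simp add: field_simps)
  qed
  have sp: "s powr (real k / 2 - 1) * s = s powr (real k / 2)"
    using s by (simp add: powr_diff)
  have "chi2_density b t * (2 * chi2_density k s * s / (s - real k + 2)) =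
        2 * (t powr (real b / 2 - 1) * (s powr (real k / 2 - 1) * s) * (exp (- t / 2) * exp (- s / 2))) /
        (2 powr (real b / 2) * Gamma (real b / 2) * (2 powr (real k / 2) * Gamma (real k / 2)) * (s - real k + 2))"
    using s t by (simp add: chi2_pos_eq field_simps)
  also have "\<dots> = 2 * X / E"
  proof -
    define D where "D = s - real k + 2"
    have D: "D > 0" using d by (simp add: D_def)
    show ?thesis unfolding ex2 sp X_def E_def D_def[symmetric] using Gk Gb D by (simp add: field_simps)
  qed
  finally have Rr: "chi2_density b t * (2 * chi2_density k s * s / (s - real k + 2)) = 2 * X / E" .
  have "2 * X / E \<le> 2 * X / (2 * sqrt pi * P)" using X E4 P E by (intro divide_left_mono) auto
  thus ?thesis using L Rr unfolding s_def by simp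
qed

lemma nn_set_integral_eq:
  fixes f :: "real \<Rightarrow> real"
  assumes [measurable]: "f \<in> borel_measurable borel" "S \<in> sets borel"
    and nn: "\<And>x. x \<in> S \<Longrightarrow> 0 \<le> f x"
    and fin: "(\<integral>\<^sup>+x. ennreal (f x * indicator S x) \<partial>lborel) < \<top>"
  shows "(\<integral>\<^sup>+x. ennreal (f x * indicator S x) \<partial>lborel) = ennreal (LBINT x:S. f x)"
proof -
  have nn': "0 \<le> f x * indicator S x" for x using nn by (simp split: split_indicator)
  have int: "integrable lborel (\<lambda>x. f x * indicator S x)"
    by (rule integrableI_bounded) (use fin nn' in auto)
  have "(\<integral>\<^sup>+x. ennreal (f x * indicator S x) \<partial>lborel) = ennreal (integral\<^sup>L lborel (\<lambda>x. f x * indicator S x))"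
    by (rule nn_integral_eq_integral[OF int]) (use nn' in auto)
  also have "integral\<^sup>L lborel (\<lambda>x. f x * indicator S x) = (LBINT x:S. f x)"
    by (simp add: set_lebesgue_integral_def mult.commute)
  finally show ?thesis .
qed

lemma interval_open: "a \<le> b \<Longrightarrow> (LBINT x=a..b. f x) = (LBINT x:{a<..<b}. (f x :: real))"
  by (simp add: interval_lebesgue_integral_def)

lemma (in prob_space) main_formula:
  fixes z :: "nat \<Rightarrow> 'a \<Rightarrow> real"
  assumes indep: "indep_vars (\<lambda>_. borel) z {1..}"
    and dist: "\<And>i. i \<ge> 1 \<Longrightarrow> distributed M lborel (z i) std_normal_density"
    and I1: "I1 \<ge> 1" and I2: "I2 \<ge> 1"
  shows "emeasure M ({\<omega> \<in> space M. (\<Sum>j = 1..I1. (z j \<omega>)\<^sup>2) > R1} \<inter> {\<omega> \<in> space M. (\<Sum>j = 1..I1+I2. (z j \<omega>)\<^sup>2) > R})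
        = (\<integral>\<^sup>+x. ennreal (chi2_density I1 x) * indicator {R1<..} x *
              (\<integral>\<^sup>+y. ennreal (chi2_density I2 y) * indicator {R - x<..} y \<partial>lborel) \<partial>lborel)"
    and "(\<integral>\<^sup>+x. ennreal (chi2_density I1 x) \<partial>lborel) = 1"
    and "(\<integral>\<^sup>+x. ennreal (chi2_density I2 x) \<partial>lborel) = 1"
proof -
  have sqind: "indep_vars (\<lambda>_. borel) (\<lambda>j \<omega>. (z j \<omega>)^2) {1..}"
    using indep_vars_compose2[OF indep, of "\<lambda>_ x. x^2" "\<lambda>_. borel"] by simp
  define X where "X \<omega> = (\<Sum>j\<in>{1..I1}. (z j \<omega>)^2)" for \<omega>
  define Y where "Y \<omega> = (\<Sum>j\<in>{I1+1..I1+I2}. (z j \<omega>)^2)" for \<omega>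
  have distX: "distributed M lborel X (chi2_density I1)"
    using chi2_sum[OF sqind, of "{1..I1}"] dist I1 unfolding X_def by auto
  have distY: "distributed M lborel Y (chi2_density I2)"
    using chi2_sum[OF sqind, of "{I1+1..I1+I2}"] dist I2 unfolding Y_def by auto
  have indXY: "indep_var borel X borel Y"
    unfolding X_def Y_def by (rule indep_blocks[OF sqind]) auto
  have indXY': "indep_var lborel X lborel Y"
    using indep_var_compose[OF indXY, of id lborel id lborel] by simp
  have joint: "distributed M (lborel \<Otimes>\<^sub>M lborel) (\<lambda>\<omega>. (X \<omega>, Y \<omega>))
      (\<lambda>(x, y). ennreal (chi2_density I1 x) * ennreal (chi2_density I2 y))"
    by (rule distributed_joint_indep[OF _ _ distX distY indXY']) (auto intro: lborel.sigma_finite_measure_axioms)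
  have sumeq: "(\<Sum>j = 1..I1+I2. (z j \<omega>)\<^sup>2) = X \<omega> + Y \<omega>" for \<omega>
    unfolding X_def Y_def by (rule sum.ub_add_nat) (use I1 in simp)
  define S where "S = {p \<in> space (lborel \<Otimes>\<^sub>M lborel). R1 < fst p \<and> R < fst p + snd p}"
  have S[measurable]: "S \<in> sets (lborel \<Otimes>\<^sub>M lborel)" unfolding S_def by measurable
  have seteq: "{\<omega> \<in> space M. (\<Sum>j = 1..I1. (z j \<omega>)\<^sup>2) > R1} \<inter> {\<omega> \<in> space M. (\<Sum>j = 1..I1+I2. (z j \<omega>)\<^sup>2) > R}
      = (\<lambda>\<omega>. (X \<omega>, Y \<omega>)) -` S \<inter> space M"
    unfolding S_def sumeq by (auto simp: X_def space_pair_measure)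
  have "emeasure M ((\<lambda>\<omega>. (X \<omega>, Y \<omega>)) -` S \<inter> space M) =
     (\<integral>\<^sup>+p. (\<lambda>(x, y). ennreal (chi2_density I1 x) * ennreal (chi2_density I2 y)) p * indicator S p \<partial>(lborel \<Otimes>\<^sub>M lborel))"
    by (rule distributed_emeasure[OF joint S])
  also have "\<dots> = (\<integral>\<^sup>+x. (\<integral>\<^sup>+y. (\<lambda>(x, y). ennreal (chi2_density I1 x) * ennreal (chi2_density I2 y)) (x, y) * indicator S (x, y) \<partial>lborel) \<partial>lborel)"
  proof -
    have m: "(\<lambda>p. (\<lambda>(x, y). ennreal (chi2_density I1 x) * ennreal (chi2_density I2 y)) p * indicator S p)
       \<in> borel_measurable (lborel \<Otimes>\<^sub>M lborel)" by measurable
    show ?thesis using lborel.nn_integral_fst[OF m] by simp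
  qed
  also have "\<dots> = (\<integral>\<^sup>+x. ennreal (chi2_density I1 x) * indicator {R1<..} x *
              (\<integral>\<^sup>+y. ennreal (chi2_density I2 y) * indicator {R - x<..} y \<partial>lborel) \<partial>lborel)"
  proof (intro nn_integral_cong)
    fix x :: real
    have "(\<integral>\<^sup>+y. (\<lambda>(x, y). ennreal (chi2_density I1 x) * ennreal (chi2_density I2 y)) (x, y) * indicator S (x, y) \<partial>lborel)
       = (\<integral>\<^sup>+y. (ennreal (chi2_density I1 x) * indicator {R1<..} x) * (ennreal (chi2_density I2 y) * indicator {R - x<..} y) \<partial>lborel)"
      by (intro nn_integral_cong) (auto simp: S_def space_pair_measure split: split_indicator)
    also have "\<dots> = ennreal (chi2_density I1 x) * indicator {R1<..} x * (\<integral>\<^sup>+y. ennreal (chi2_density I2 y) * indicator {R - x<..} y \<partial>lborel)"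
      by (rule nn_integral_cmult) measurable
    finally show "(\<integral>\<^sup>+y. (\<lambda>(x, y). ennreal (chi2_density I1 x) * ennreal (chi2_density I2 y)) (x, y) * indicator S (x, y) \<partial>lborel)
       = ennreal (chi2_density I1 x) * indicator {R1<..} x * (\<integral>\<^sup>+y. ennreal (chi2_density I2 y) * indicator {R - x<..} y \<partial>lborel)" .
  qed
  finally show "emeasure M ({\<omega> \<in> space M. (\<Sum>j = 1..I1. (z j \<omega>)\<^sup>2) > R1} \<inter> {\<omega> \<in> space M. (\<Sum>j = 1..I1+I2. (z j \<omega>)\<^sup>2) > R})
        = (\<integral>\<^sup>+x. ennreal (chi2_density I1 x) * indicator {R1<..} x *
              (\<integral>\<^sup>+y. ennreal (chi2_density I2 y) * indicator {R - x<..} y \<partial>lborel) \<partial>lborel)"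
    unfolding seteq .
  have "emeasure M (X -` UNIV \<inter> space M) = (\<integral>\<^sup>+x. ennreal (chi2_density I1 x) * indicator UNIV x \<partial>lborel)"
    by (rule distributed_emeasure[OF distX]) simp
  thus "(\<integral>\<^sup>+x. ennreal (chi2_density I1 x) \<partial>lborel) = 1" by (simp add: emeasure_space_1)
  have "emeasure M (Y -` UNIV \<inter> space M) = (\<integral>\<^sup>+x. ennreal (chi2_density I2 x) * indicator UNIV x \<partial>lborel)"
    by (rule distributed_emeasure[OF distY]) simp
  thus "(\<integral>\<^sup>+x. ennreal (chi2_density I2 x) \<partial>lborel) = 1" by (simp add: emeasure_space_1)
qed

lemma set_int_nonneg:
  assumes "\<And>x. x \<in> S \<Longrightarrow> 0 \<le> f x"
  shows "0 \<le> (LBINT x:S. (f x :: real))"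
  unfolding set_lebesgue_integral_def using assms by (intro integral_nonneg_AE AE_I2) (auto split: split_indicator)

lemma nn_set_integral_eq':
  fixes f :: "real \<Rightarrow> real"
  assumes int: "set_integrable lborel S f"
    and nn: "\<And>x. x \<in> S \<Longrightarrow> 0 \<le> f x"
  shows "(\<integral>\<^sup>+x. ennreal (f x * indicator S x) \<partial>lborel) = ennreal (LBINT x:S. f x)"
proof -
  have nn': "0 \<le> f x * indicator S x" for x using nn by (simp split: split_indicator)
  have int': "integrable lborel (\<lambda>x. f x * indicator S x)"
    using int unfolding set_integrable_def by (simp add: mult.commute)
  have "(\<integral>\<^sup>+x. ennreal (f x * indicator S x) \<partial>lborel) = ennreal (integral\<^sup>L lborel (\<lambda>x. f x * indicator S x))"
    by (rule nn_integral_eq_integral[OF int']) (use nn' in auto)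
  also have "integral\<^sup>L lborel (\<lambda>x. f x * indicator S x) = (LBINT x:S. f x)"
    by (simp add: set_lebesgue_integral_def mult.commute)
  finally show ?thesis .
qed

locale chi_setup =
  fixes b k :: nat and R1 R :: real
  assumes b: "b \<ge> 1" and k: "k \<ge> 2" and R1: "0 < R1" and R1R: "R1 < R"
    and massb: "(\<integral>\<^sup>+x. ennreal (chi2_density b x) \<partial>lborel) = 1"
    and massk: "(\<integral>\<^sup>+x. ennreal (chi2_density k x) \<partial>lborel) = 1"
begin

definition Q :: "real \<Rightarrow> ennreal" where
  "Q s = (\<integral>\<^sup>+y. ennreal (chi2_density k y) * indicator {s<..} y \<partial>lborel)"

definition E :: ennreal where
  "E = (\<integral>\<^sup>+x. ennreal (chi2_density b x) * indicator {R1<..} x * Q (R - x) \<partial>lborel)"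

lemma Q_le1: "Q s \<le> 1"
proof -
  have "Q s \<le> (\<integral>\<^sup>+y. ennreal (chi2_density k y) \<partial>lborel)"
    unfolding Q_def by (intro nn_integral_mono) (auto split: split_indicator)
  thus ?thesis using massk by simp
qed

lemma Q_neg: "s < 0 \<Longrightarrow> Q s = 1"
proof -
  assume s: "s < 0"
  have "Q s = (\<integral>\<^sup>+y. ennreal (chi2_density k y) \<partial>lborel)"
    unfolding Q_def using s by (intro nn_integral_cong) (auto simp: chi2_nonpos split: split_indicator)
  thus ?thesis using massk by simp
qed

lemma fin_b: "(\<integral>\<^sup>+x. ennreal (chi2_density b x * indicator S x) \<partial>lborel) < \<top>"
proof -
  have "(\<integral>\<^sup>+x. ennreal (chi2_density b x * indicator S x) \<partial>lborel) \<le> (\<integral>\<^sup>+x. ennreal (chi2_density b x) \<partial>lborel)"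
    by (intro nn_integral_mono) (auto simp: chi2_nonneg split: split_indicator)
  hence "(\<integral>\<^sup>+x. ennreal (chi2_density b x * indicator S x) \<partial>lborel) \<le> 1" using massb by simp
  thus ?thesis using ennreal_one_less_top by (rule le_less_trans)
qed

lemma E_le1: "E \<le> 1"
proof -
  have "E \<le> (\<integral>\<^sup>+x. ennreal (chi2_density b x) \<partial>lborel)"
    unfolding E_def
  proof (intro nn_integral_mono)
    fix x
    have "indicator {R1<..} x * Q (R - x) \<le> (1::ennreal)"
      using Q_le1[of "R - x"] by (auto split: split_indicator)
    thus "ennreal (chi2_density b x) * indicator {R1<..} x * Q (R - x) \<le> ennreal (chi2_density b x)"
      using mult_left_mono[of "indicator {R1<..} x * Q (R - x)" 1 "ennreal (chi2_density b x)"]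
      by (simp add: mult.assoc)
  qed
  thus ?thesis using massb by simp
qed

lemma p_part: "(\<integral>\<^sup>+x. ennreal (chi2_density b x * indicator S x) \<partial>lborel) = ennreal (LBINT x:S. chi2_density b x)"
  if "S \<in> sets borel" for S
  by (rule nn_set_integral_eq) (use that fin_b chi2_nonneg in auto)

end

context chi_setup begin

lemma Kpos:
  assumes K: "K = exp (- (R - real k) / 2) /
             (2 powr (real b / 2) * sqrt pi * real k powr ((real k - 1) / 2) * Gamma (real b / 2))"
  shows "K > 0"
proof -
  have "Gamma (real b / 2) > 0" using b by (intro Gamma_real_pos) simp
  thus ?thesis unfolding K using k by simp
qed

lemma lower:
  assumes K: "K = exp (- (R - real k) / 2) /
             (2 powr (real b / 2) * sqrt pi * real k powr ((real k - 1) / 2) * Gamma (real b / 2))"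
  shows "ennreal ((LBINT t:{R<..}. chi2_density b t) +
           sqrt pi * K / 2 * (LBINT t=R1..R. (R - t) powr (real k / 2 - 1) * t powr (real b / 2 - 1))) \<le> E"
proof -
  have K0: "K > 0" using Kpos[OF K] .
  define L where "L t = sqrt pi * K / 2 * ((R - t) powr (real k / 2 - 1) * t powr (real b / 2 - 1))" for t
  have L0: "L t \<ge> 0" for t using K0 by (simp add: L_def)
  have pt: "ennreal (chi2_density b x * indicator {R<..} x) + ennreal (L x * indicator {R1<..<R} x)
            \<le> ennreal (chi2_density b x) * indicator {R1<..} x * Q (R - x)" for x
  proof -
    consider "x > R" | "R1 < x \<and> x < R" | "x = R" | "x \<le> R1" by linarith
    thus ?thesis
    proof cases
      case 1
      have e: "indicator {R<..} x = (1::real)" "indicator {R1<..<R} x = (0::real)"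
        "indicator {R1<..} x = (1::ennreal)" "Q (R - x) = 1"
        using 1 R1R by (auto intro!: Q_neg)
      show ?thesis by (simp only: e) simp
    next
      case 2
      have Qb: "ennreal (2 * chi2_density k (R - x)) \<le> Q (R - x)"
        unfolding Q_def using 2 by (intro tail_lower k) simp
      have "ennreal (L x) \<le> ennreal (chi2_density b x * (2 * chi2_density k (R - x)))"
        unfolding L_def using 2 R1 by (intro ennreal_leI pw_lower[OF b k _ _ K]) auto
      also have "\<dots> = ennreal (chi2_density b x) * ennreal (2 * chi2_density k (R - x))"
        by (simp add: ennreal_mult chi2_nonneg)
      also have "\<dots> \<le> ennreal (chi2_density b x) * Q (R - x)"
        by (intro mult_left_mono Qb) simp
      finally have "ennreal (L x) \<le> ennreal (chi2_density b x) * Q (R - x)" .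
      moreover have e: "indicator {R<..} x = (0::real)" "indicator {R1<..<R} x = (1::real)"
        "indicator {R1<..} x = (1::ennreal)"
        using 2 by auto
      ultimately show ?thesis by (simp only: e) simp
    next
      case 3
      have e: "indicator {R<..} x = (0::real)" "indicator {R1<..<R} x = (0::real)"
        using 3 by auto
      show ?thesis by (simp only: e) simp
    next
      case 4
      have e: "indicator {R<..} x = (0::real)" "indicator {R1<..<R} x = (0::real)"
        using 4 R1R by auto
      show ?thesis by (simp only: e) simp
    qed
  qed
  have "(\<integral>\<^sup>+x. ennreal (chi2_density b x * indicator {R<..} x) + ennreal (L x * indicator {R1<..<R} x) \<partial>lborel) \<le> E"
    unfolding E_def by (intro nn_integral_mono pt)
  also have "(\<integral>\<^sup>+x. ennreal (chi2_density b x * indicator {R<..} x) + ennreal (L x * indicator {R1<..<R} x) \<partial>lborel) =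
     (\<integral>\<^sup>+x. ennreal (chi2_density b x * indicator {R<..} x) \<partial>lborel) + (\<integral>\<^sup>+x. ennreal (L x * indicator {R1<..<R} x) \<partial>lborel)"
    unfolding L_def by (rule nn_integral_add) auto
  finally have sum_le: "(\<integral>\<^sup>+x. ennreal (chi2_density b x * indicator {R<..} x) \<partial>lborel) + (\<integral>\<^sup>+x. ennreal (L x * indicator {R1<..<R} x) \<partial>lborel) \<le> E" .
  have fin2: "(\<integral>\<^sup>+x. ennreal (L x * indicator {R1<..<R} x) \<partial>lborel) < \<top>"
  proof -
    have "(\<integral>\<^sup>+x. ennreal (L x * indicator {R1<..<R} x) \<partial>lborel) \<le> E"
      by (rule order_trans[OF _ sum_le], rule add_increasing) simp_all
    also have "E \<le> 1" by (rule E_le1)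
    finally show ?thesis using ennreal_one_less_top by (rule le_less_trans)
  qed
  have I2: "(\<integral>\<^sup>+x. ennreal (L x * indicator {R1<..<R} x) \<partial>lborel) = ennreal (LBINT x:{R1<..<R}. L x)"
    by (rule nn_set_integral_eq) (use fin2 L0 in \<open>auto simp: L_def\<close>)
  have I1: "(\<integral>\<^sup>+x. ennreal (chi2_density b x * indicator {R<..} x) \<partial>lborel) = ennreal (LBINT t:{R<..}. chi2_density b t)"
    by (rule p_part) simp
  have LL: "(LBINT x:{R1<..<R}. L x) = sqrt pi * K / 2 * (LBINT t=R1..R. (R - t) powr (real k / 2 - 1) * t powr (real b / 2 - 1))"
    unfolding L_def interval_open[OF less_imp_le[OF R1R]] by (rule set_integral_mult_right)
  have n1: "0 \<le> (LBINT t:{R<..}. chi2_density b t)" by (intro set_int_nonneg chi2_nonneg)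
  have n2: "0 \<le> (LBINT x:{R1<..<R}. L x)" by (intro set_int_nonneg L0)
  have "ennreal ((LBINT t:{R<..}. chi2_density b t) + (LBINT x:{R1<..<R}. L x)) \<le> E"
    using sum_le unfolding I1 I2 using n1 n2 by (simp add: ennreal_plus)
  thus ?thesis unfolding LL .
qed

end

context chi_setup begin

lemma upper:
  assumes K: "K = exp (- (R - real k) / 2) /
             (2 powr (real b / 2) * sqrt pi * real k powr ((real k - 1) / 2) * Gamma (real b / 2))"
  assumes a: "R1 < a" "a < R" "R - a > real k - 2"
  shows "E \<le> ennreal ((LBINT t:{R<..}. chi2_density b t) +
            (K * (LBINT t=R1..a. t powr (real b / 2 - 1) * (R - t) powr (real k / 2) / (R - real k + 2 - t))
             + (LBINT t=a..R. chi2_density b t)))"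
proof -
  have K0: "K > 0" using Kpos[OF K] .
  define g where "g t = t powr (real b / 2 - 1) * (R - t) powr (real k / 2) / (R - real k + 2 - t)" for t
  have g0: "g t \<ge> 0" if "t \<in> {R1<..<a}" for t
    using that a by (auto simp: g_def intro!: divide_nonneg_pos)
  have gc: "continuous_on {R1..a} g"
    unfolding g_def using a R1 by (auto intro!: continuous_intros)
  have gi: "set_integrable lborel {R1<..<a} (\<lambda>t. K * g t)"
    by (intro set_integrable_mult_right set_integrable_subset[OF borel_integrable_atLeastAtMost'[OF gc]]) auto
  have pt: "AE x in lborel. ennreal (chi2_density b x) * indicator {R1<..} x * Q (R - x) \<le>
      ennreal (chi2_density b x * indicator {R<..} x) + ennreal (K * g x * indicator {R1<..<a} x)
      + ennreal (chi2_density b x * indicator {a<..<R} x)"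
    using AE_lborel_singleton[of a] AE_lborel_singleton[of R]
  proof eventually_elim
    fix x :: real assume xa: "x \<noteq> a" and xR: "x \<noteq> R"
    consider "x \<le> R1" | "R1 < x \<and> x < a" | "a < x \<and> x < R" | "R < x" using xa xR by linarith
    thus "ennreal (chi2_density b x) * indicator {R1<..} x * Q (R - x) \<le>
      ennreal (chi2_density b x * indicator {R<..} x) + ennreal (K * g x * indicator {R1<..<a} x)
      + ennreal (chi2_density b x * indicator {a<..<R} x)"
    proof cases
      case 1
      have e: "indicator {R1<..} x = (0::ennreal)" using 1 by auto
      show ?thesis by (simp only: e) simp
    next
      case 2
      have Qb: "Q (R - x) \<le> ennreal (2 * chi2_density k (R - x) * (R - x) / ((R - x) - real k + 2))"
        unfolding Q_def using 2 a by (intro tail_upper k) auto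
      have "ennreal (chi2_density b x) * Q (R - x) \<le>
            ennreal (chi2_density b x) * ennreal (2 * chi2_density k (R - x) * (R - x) / ((R - x) - real k + 2))"
        by (intro mult_left_mono Qb) simp
      also have "\<dots> = ennreal (chi2_density b x * (2 * chi2_density k (R - x) * (R - x) / ((R - x) - real k + 2)))"
        by (rule ennreal_mult'[symmetric]) (simp add: chi2_nonneg)
      also have "\<dots> \<le> ennreal (K * g x)"
        unfolding g_def using 2 a R1 by (intro ennreal_leI pw_upper[OF b k _ _ _ K]) auto
      finally have *: "ennreal (chi2_density b x) * Q (R - x) \<le> ennreal (K * g x)" .
      have e: "indicator {R1<..} x = (1::ennreal)" "indicator {R<..} x = (0::real)"
        "indicator {R1<..<a} x = (1::real)" "indicator {a<..<R} x = (0::real)"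
        using 2 a by auto
      show ?thesis using * by (simp only: e) simp
    next
      case 3
      have "ennreal (chi2_density b x) * Q (R - x) \<le> ennreal (chi2_density b x) * 1"
        by (intro mult_left_mono Q_le1) simp
      moreover have e: "indicator {R1<..} x = (1::ennreal)" "indicator {R<..} x = (0::real)"
        "indicator {R1<..<a} x = (0::real)" "indicator {a<..<R} x = (1::real)"
        using 3 a by auto
      ultimately show ?thesis by (simp only: e) simp
    next
      case 4
      have "ennreal (chi2_density b x) * Q (R - x) \<le> ennreal (chi2_density b x) * 1"
        by (intro mult_left_mono Q_le1) simp
      moreover have e: "indicator {R1<..} x = (1::ennreal)" "indicator {R<..} x = (1::real)"
        "indicator {R1<..<a} x = (0::real)" "indicator {a<..<R} x = (0::real)"
        using 4 a R1R by auto
      ultimately show ?thesis by (simp only: e) simp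
    qed
  qed
  have "E \<le> (\<integral>\<^sup>+x. ennreal (chi2_density b x * indicator {R<..} x) + ennreal (K * g x * indicator {R1<..<a} x)
      + ennreal (chi2_density b x * indicator {a<..<R} x) \<partial>lborel)"
    unfolding E_def by (rule nn_integral_mono_AE[OF pt])
  also have "\<dots> = (\<integral>\<^sup>+x. ennreal (chi2_density b x * indicator {R<..} x) + ennreal (K * g x * indicator {R1<..<a} x) \<partial>lborel)
      + (\<integral>\<^sup>+x. ennreal (chi2_density b x * indicator {a<..<R} x) \<partial>lborel)"
    unfolding g_def by (rule nn_integral_add) auto
  also have "(\<integral>\<^sup>+x. ennreal (chi2_density b x * indicator {R<..} x) + ennreal (K * g x * indicator {R1<..<a} x) \<partial>lborel)
     = (\<integral>\<^sup>+x. ennreal (chi2_density b x * indicator {R<..} x) \<partial>lborel) + (\<integral>\<^sup>+x. ennreal (K * g x * indicator {R1<..<a} x) \<partial>lborel)"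
    unfolding g_def by (rule nn_integral_add) auto
  also have "(\<integral>\<^sup>+x. ennreal (chi2_density b x * indicator {R<..} x) \<partial>lborel) = ennreal (LBINT t:{R<..}. chi2_density b t)"
    by (rule p_part) simp
  also have "(\<integral>\<^sup>+x. ennreal (chi2_density b x * indicator {a<..<R} x) \<partial>lborel) = ennreal (LBINT t:{a<..<R}. chi2_density b t)"
    by (rule p_part) simp
  also have "(\<integral>\<^sup>+x. ennreal (K * g x * indicator {R1<..<a} x) \<partial>lborel) = ennreal (LBINT t:{R1<..<a}. K * g t)"
    by (rule nn_set_integral_eq'[OF gi]) (use g0 K0 in auto)
  also have "(LBINT t:{R1<..<a}. K * g t) = K * (LBINT t=R1..a. g t)"
    unfolding interval_open[of R1 a, OF less_imp_le[OF a(1)]] by (rule set_integral_mult_right)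
  also have "(LBINT t:{a<..<R}. chi2_density b t) = (LBINT t=a..R. chi2_density b t)"
    using a by (simp add: interval_open)
  finally have main: "E \<le> ennreal (LBINT t:{R<..}. chi2_density b t) + ennreal (K * (LBINT t=R1..a. g t))
       + ennreal (LBINT t=a..R. chi2_density b t)" .
  have n1: "0 \<le> (LBINT t:{R<..}. chi2_density b t)" by (intro set_int_nonneg chi2_nonneg)
  have n3: "0 \<le> (LBINT t=a..R. chi2_density b t)"
    using a by (simp add: interval_open set_int_nonneg chi2_nonneg)
  have n2: "0 \<le> K * (LBINT t=R1..a. g t)"
    using a K0 g0 by (auto simp: interval_open intro!: set_int_nonneg mult_nonneg_nonneg)
  have "ennreal (LBINT t:{R<..}. chi2_density b t) + ennreal (K * (LBINT t=R1..a. g t))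
       + ennreal (LBINT t=a..R. chi2_density b t) =
     ennreal ((LBINT t:{R<..}. chi2_density b t) + (K * (LBINT t=R1..a. g t) + (LBINT t=a..R. chi2_density b t)))"
    using n1 n2 n3 by (simp add: ennreal_plus add.assoc)
  with main show ?thesis unfolding g_def by simp
qed

end

theorem theorem2:
  fixes M :: "'a measure" and z :: "nat \<Rightarrow> 'a \<Rightarrow> real"
    and I1 I2 :: nat and r1 r2 :: real
  assumes "prob_space M"
    and "prob_space.indep_vars M (\<lambda>_. borel) z {1..}"
    and "\<And>i. i \<ge> 1 \<Longrightarrow> distributed M lborel (z i) std_normal_density"
    and "I1 \<ge> 1" and "I2 \<ge> 2"
    and "0 < r1" and "r1 < r2"
  shows
    "let N1 = I1; N2 = I1 + I2;
         \<zeta>1 = {\<omega> \<in> space M. (\<Sum>j = 1..N1. (z j \<omega>)\<^sup>2) > r1\<^sup>2};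
         \<zeta>2 = {\<omega> \<in> space M. (\<Sum>j = 1..N2. (z j \<omega>)\<^sup>2) > r2\<^sup>2};
         p = (LBINT t:{r2\<^sup>2<..}. chi2_density I1 t);
         K = exp (- (r2\<^sup>2 - real I2) / 2) /
             (2 powr (real N1 / 2) * sqrt pi * real I2 powr ((real I2 - 1) / 2) * Gamma (real N1 / 2));
         g = (\<lambda>t. t powr (real N1 / 2 - 1) * (r2\<^sup>2 - t) powr (real I2 / 2) / (r2\<^sup>2 - real I2 + 2 - t));
         \<delta>lo = (real I2 - 2) / r2\<^sup>2;
         \<delta>hi = (r2\<^sup>2 - r1\<^sup>2) / r2\<^sup>2
     in p + sqrt pi * K / 2 *
              (LBINT t=r1\<^sup>2..r2\<^sup>2. (r2\<^sup>2 - t) powr (real I2 / 2 - 1) * t powr (real I1 / 2 - 1))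
          \<le> measure M (\<zeta>1 \<inter> \<zeta>2)
      \<and> ereal (measure M (\<zeta>1 \<inter> \<zeta>2)) \<le>
          ereal p + (INF \<delta>\<in>{\<delta>lo<..<\<delta>hi}.
             ereal (K * (LBINT t=r1\<^sup>2..(1 - \<delta>) * r2\<^sup>2. g t)
                    + (LBINT t=(1 - \<delta>) * r2\<^sup>2..r2\<^sup>2. chi2_density I1 t)))"
proof -
  interpret prob_space M by fact
  define R1 where "R1 = r1\<^sup>2"
  define R where "R = r2\<^sup>2"
  have R1: "0 < R1" using assms(6) by (simp add: R1_def)
  have R1R: "R1 < R" unfolding R1_def R_def using assms(6,7) by (intro power_strict_mono) auto
  define Z where "Z = {\<omega> \<in> space M. (\<Sum>j = 1..I1. (z j \<omega>)\<^sup>2) > R1} \<inter> {\<omega> \<in> space M. (\<Sum>j = 1..I1+I2. (z j \<omega>)\<^sup>2) > R}"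
  have mf: "emeasure M Z
        = (\<integral>\<^sup>+x. ennreal (chi2_density I1 x) * indicator {R1<..} x *
              (\<integral>\<^sup>+y. ennreal (chi2_density I2 y) * indicator {R - x<..} y \<partial>lborel) \<partial>lborel)"
    and mb: "(\<integral>\<^sup>+x. ennreal (chi2_density I1 x) \<partial>lborel) = 1"
    and mk: "(\<integral>\<^sup>+x. ennreal (chi2_density I2 x) \<partial>lborel) = 1"
    unfolding Z_def using main_formula(1)[OF assms(2,3,4), of I2 R1 R] main_formula(2,3)[OF assms(2,3,4), of I2] assms(5) by auto
  interpret C: chi_setup I1 I2 R1 R
    by unfold_locales (use assms(4,5) R1 R1R mb mk in auto)
  have EZ: "emeasure M Z = C.E" unfolding mf C.E_def C.Q_def ..
  define K where "K = exp (- (R - real I2) / 2) /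
             (2 powr (real I1 / 2) * sqrt pi * real I2 powr ((real I2 - 1) / 2) * Gamma (real I1 / 2))"
  define p where "p = (LBINT t:{R<..}. chi2_density I1 t)"
  define g where "g = (\<lambda>t. t powr (real I1 / 2 - 1) * (R - t) powr (real I2 / 2) / (R - real I2 + 2 - t))"
  have mZ: "emeasure M Z = ennreal (measure M Z)" by (simp add: emeasure_eq_measure)
  have low: "p + sqrt pi * K / 2 * (LBINT t=R1..R. (R - t) powr (real I2 / 2 - 1) * t powr (real I1 / 2 - 1)) \<le> measure M Z"
  proof -
    have "ennreal (p + sqrt pi * K / 2 * (LBINT t=R1..R. (R - t) powr (real I2 / 2 - 1) * t powr (real I1 / 2 - 1)))
        \<le> ennreal (measure M Z)"
      unfolding p_def mZ[symmetric] EZ by (rule C.lower) (simp add: K_def)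
    thus ?thesis by (simp add: ennreal_le_iff)
  qed
  have upp: "measure M Z \<le> p + (K * (LBINT t=R1..(1 - \<delta>) * R. g t) + (LBINT t=(1 - \<delta>) * R..R. chi2_density I1 t))"
    if d: "\<delta> \<in> {(real I2 - 2) / R<..<(R - R1) / R}" for \<delta>
  proof -
    have Rpos: "R > 0" using R1 R1R by simp
    from d have d1: "(real I2 - 2) < \<delta> * R" and d2: "\<delta> * R < R - R1"
      using Rpos by (auto simp: field_simps)
    have "real I2 \<ge> 2" using assms(5) by simp
    hence "\<delta> * R > 0" using d1 by linarith
    hence dpos: "\<delta> > 0" using Rpos by (simp add: zero_less_mult_iff)
    have a1: "R1 < (1 - \<delta>) * R" using d2 by (simp add: algebra_simps)
    have a2: "(1 - \<delta>) * R < R" using dpos Rpos by (simp add: algebra_simps)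
    have a3: "R - (1 - \<delta>) * R > real I2 - 2" using d1 by (simp add: algebra_simps)
    define a where "a = (1 - \<delta>) * R"
    have gnn: "0 \<le> (LBINT t=R1..a. g t)"
      unfolding interval_open[OF less_imp_le[OF a1[folded a_def]]]
      using a2 a3 R1 unfolding a_def[symmetric] by (intro set_int_nonneg) (auto simp: g_def intro!: divide_nonneg_pos)
    have Kp: "K > 0" unfolding K_def by (rule C.Kpos) simp
    have Tnn: "0 \<le> (LBINT t=a..R. chi2_density I1 t)"
      using a2 unfolding a_def[symmetric] by (simp add: interval_open set_int_nonneg chi2_nonneg)
    have pnn: "0 \<le> p" unfolding p_def by (intro set_int_nonneg chi2_nonneg)
    have "ennreal (measure M Z) \<le> ennreal (p + (K * (LBINT t=R1..(1 - \<delta>) * R. g t) + (LBINT t=(1 - \<delta>) * R..R. chi2_density I1 t)))"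
      unfolding mZ[symmetric] EZ p_def g_def by (rule C.upper[OF _ a1 a2 a3]) (simp add: K_def)
    moreover have "0 \<le> p + (K * (LBINT t=R1..(1 - \<delta>) * R. g t) + (LBINT t=(1 - \<delta>) * R..R. chi2_density I1 t))"
      using gnn Tnn pnn Kp unfolding a_def by simp
    ultimately show ?thesis by (simp add: ennreal_le_iff)
  qed
  have upp2: "ereal (measure M Z) \<le> ereal p + (INF \<delta>\<in>{(real I2 - 2) / R<..<(R - R1) / R}.
      ereal (K * (LBINT t=R1..(1 - \<delta>) * R. g t) + (LBINT t=(1 - \<delta>) * R..R. chi2_density I1 t)))"
  proof -
    have "ereal (measure M Z - p) \<le> (INF \<delta>\<in>{(real I2 - 2) / R<..<(R - R1) / R}.
      ereal (K * (LBINT t=R1..(1 - \<delta>) * R. g t) + (LBINT t=(1 - \<delta>) * R..R. chi2_density I1 t)))"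
    proof (rule INF_greatest)
      fix \<delta> assume "\<delta> \<in> {(real I2 - 2) / R<..<(R - R1) / R}"
      from upp[OF this] show "ereal (measure M Z - p) \<le>
        ereal (K * (LBINT t=R1..(1 - \<delta>) * R. g t) + (LBINT t=(1 - \<delta>) * R..R. chi2_density I1 t))"
        by simp
    qed
    hence "ereal p + ereal (measure M Z - p) \<le> ereal p + (INF \<delta>\<in>{(real I2 - 2) / R<..<(R - R1) / R}.
      ereal (K * (LBINT t=R1..(1 - \<delta>) * R. g t) + (LBINT t=(1 - \<delta>) * R..R. chi2_density I1 t)))"
      by (rule add_left_mono)
    thus ?thesis by simp
  qed
  show ?thesis
    unfolding Let_def R1_def[symmetric] R_def[symmetric] Z_def[symmetric] p_def[symmetric] K_def[symmetric]
    using low upp2 unfolding g_def by simp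
qed

end
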